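(* Let $K$ be a ramified quadratic extension of $\mathbb{Q}_2$, $d=2m$ with $m$ odd, $m\ge3$, and $f=a_1x_1^d+\dots+a_sx_s^d$ with all $a_i\in\mathcal{O}\setminus\{0\}$. Suppose that for some level $k$, $f$ has four distinct variables at level $k$ that can be split into two disjoint pairs, each pair consisting of two variables with the same $\pi$-coefficient, and that $f$ has a variable in at least one of the levels $k+2$, $k+3$, $k+4$. Then $f$ has a nontrivial zero in $K$.
   Context: $\mathcal{O}$ is the ring of integers of $K$ and $\pi$ the uniformizer: $\pi=\sqrt{2},\sqrt{-2},\sqrt{10},\sqrt{-10},1+\sqrt{-1},1+\sqrt{-5}$ for $K=\mathbb{Q}_2(\sqrt2),\mathbb{Q}_2(\sqrt{-2}),\mathbb{Q}_2(\sqrt{10}),\mathbb{Q}_2(\sqrt{-10}),\mathbb{Q}_2(\sqrt{-1}),\mathbb{Q}_2(\sqrt{-5})$ respectively. Each unit $u$ has a unique expansion $u=c_0+c_1\pi+c_2\pi^2+\cdots$ with $c_j\in\{0,1\}$, $c_0=1$. Writing $a_i=\pi^r u$ with $u$ a unit, the variable $x_i$ is at level $r\bmod d$ (levels are residues modulo $d$), and its $\pi$-coefficient is $c_1$ of $u$. A nontrivial zero is a point of $K^s$, not all coordinates zero, where $f$ vanishes. *)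

theory Defs
  imports Main
begin

type_synonym z2 = "nat \<Rightarrow> int"

definition Z2 :: "z2 set" where
  "Z2 = {x. \<forall>n. 0 \<le> x n \<and> x n < 2 ^ n \<and> x (Suc n) mod 2 ^ n = x n}"

definition z2_of_int :: "int \<Rightarrow> z2" where
  "z2_of_int k = (\<lambda>n. k mod 2 ^ n)"

definition z2_add :: "z2 \<Rightarrow> z2 \<Rightarrow> z2" where
  "z2_add x y = (\<lambda>n. (x n + y n) mod 2 ^ n)"

definition z2_mul :: "z2 \<Rightarrow> z2 \<Rightarrow> z2" where
  "z2_mul x y = (\<lambda>n. (x n * y n) mod 2 ^ n)"

definition z2_neg :: "z2 \<Rightarrow> z2" where
  "z2_neg x = (\<lambda>n. (- x n) mod 2 ^ n)"

text \<open>An element (a, b) stands for a + b pi. The parameter P = (tr, nm) gives the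
minimal polynomial X^2 - tr X + nm of the uniformizer pi over Q_2.\<close>

type_synonym oelt = "z2 \<times> z2"

definition O_carrier :: "oelt set" where
  "O_carrier = Z2 \<times> Z2"

definition o_zero :: oelt where "o_zero = (z2_of_int 0, z2_of_int 0)"
definition o_one :: oelt where "o_one = (z2_of_int 1, z2_of_int 0)"
definition o_pi :: oelt where "o_pi = (z2_of_int 0, z2_of_int 1)"

definition o_add :: "oelt \<Rightarrow> oelt \<Rightarrow> oelt" where
  "o_add u v = (z2_add (fst u) (fst v), z2_add (snd u) (snd v))"

definition o_neg :: "oelt \<Rightarrow> oelt" where
  "o_neg u = (z2_neg (fst u), z2_neg (snd u))"

definition o_sub :: "oelt \<Rightarrow> oelt \<Rightarrow> oelt" where
  "o_sub u v = o_add u (o_neg v)"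

definition o_mul :: "int \<times> int \<Rightarrow> oelt \<Rightarrow> oelt \<Rightarrow> oelt" where
  "o_mul P u v =
     (let a = fst u; b = snd u; c = fst v; e = snd v; bd = z2_mul b e in
      (z2_add (z2_mul a c) (z2_neg (z2_mul (z2_of_int (snd P)) bd)),
       z2_add (z2_add (z2_mul a e) (z2_mul b c)) (z2_mul (z2_of_int (fst P)) bd)))"

primrec o_pow :: "int \<times> int \<Rightarrow> oelt \<Rightarrow> nat \<Rightarrow> oelt" where
  "o_pow P u 0 = o_one"
| "o_pow P u (Suc n) = o_mul P (o_pow P u n) u"

primrec o_sum :: "(nat \<Rightarrow> oelt) \<Rightarrow> nat \<Rightarrow> oelt" where
  "o_sum f 0 = o_zero"
| "o_sum f (Suc n) = o_add (o_sum f n) (f n)"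

definition o_unit :: "int \<times> int \<Rightarrow> oelt \<Rightarrow> bool" where
  "o_unit P u \<longleftrightarrow> u \<in> O_carrier \<and> (\<exists>v\<in>O_carrier. o_mul P u v = o_one)"

definition o_dvd :: "int \<times> int \<Rightarrow> oelt \<Rightarrow> oelt \<Rightarrow> bool" where
  "o_dvd P u v \<longleftrightarrow> (\<exists>w\<in>O_carrier. v = o_mul P u w)"

text \<open>The six ramified quadratic extensions of Q_2 of the context, via the minimal
polynomial X^2 - tr X + nm of their uniformizer:
 sqrt 2: X^2-2; sqrt(-2): X^2+2; sqrt 10: X^2-10; sqrt(-10): X^2+10;
 1+sqrt(-1): X^2-2X+2; 1+sqrt(-5): X^2-2X+6.\<close>

definition ramified_params :: "(int \<times> int) set" where
  "ramified_params = {(0, -2), (0, 2), (0, -10), (0, 10), (2, 2), (2, 6)}"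

text \<open>pi-coefficient c1 of a unit u = c0 + c1 pi + ... (c0 = 1): the unique c in {0,1}
with u == 1 + c pi mod pi^2.\<close>

definition pi_coeff :: "int \<times> int \<Rightarrow> oelt \<Rightarrow> nat \<Rightarrow> bool" where
  "pi_coeff P u c \<longleftrightarrow> c \<in> {0, 1} \<and>
     o_dvd P (o_pow P o_pi 2) (o_sub u (o_add o_one (o_mul P (z2_of_int (int c), z2_of_int 0) o_pi)))"

definition level_coeff :: "int \<times> int \<Rightarrow> nat \<Rightarrow> oelt \<Rightarrow> nat \<Rightarrow> nat \<Rightarrow> bool" where
  "level_coeff P d a k c \<longleftrightarrow>
     (\<exists>r u. o_unit P u \<and> a = o_mul P (o_pow P o_pi r) u \<and> r mod d = k \<and> pi_coeff P u c)"

definition at_level :: "int \<times> int \<Rightarrow> nat \<Rightarrow> oelt \<Rightarrow> nat \<Rightarrow> bool" where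
  "at_level P d a k \<longleftrightarrow> (\<exists>c. level_coeff P d a k c)"

end

theory Submission
  imports Defs
begin


definition pmul :: "int \<times> int \<Rightarrow> int \<times> int \<Rightarrow> int \<times> int \<Rightarrow> int \<times> int" where
  "pmul P u v = (fst u * fst v - snd P * (snd u * snd v),
                 fst u * snd v + snd u * fst v + fst P * (snd u * snd v))"

typedef qq = "UNIV :: (int \<times> int \<Rightarrow> int \<times> int) set" by auto

instantiation qq :: comm_ring_1
begin
definition "zero_qq = Abs_qq (\<lambda>Q. (0, 0))"
definition "one_qq = Abs_qq (\<lambda>Q. (1, 0))"
definition "plus_qq x y = Abs_qq (\<lambda>Q. (fst (Rep_qq x Q) + fst (Rep_qq y Q), snd (Rep_qq x Q) + snd (Rep_qq y Q)))"
definition "minus_qq x y = Abs_qq (\<lambda>Q. (fst (Rep_qq x Q) - fst (Rep_qq y Q), snd (Rep_qq x Q) - snd (Rep_qq y Q)))"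
definition "uminus_qq x = Abs_qq (\<lambda>Q. (- fst (Rep_qq x Q), - snd (Rep_qq x Q)))"
definition "times_qq x y = Abs_qq (\<lambda>Q. pmul Q (Rep_qq x Q) (Rep_qq y Q))"
instance
proof
  fix a b c :: qq
  show "a + b + c = a + (b + c)"
    by (simp add: plus_qq_def Abs_qq_inverse algebra_simps)
  show "a + b = b + a"
    by (simp add: plus_qq_def add.commute)
  show "0 + a = a"
    by (simp add: plus_qq_def zero_qq_def Abs_qq_inverse Rep_qq_inverse)
  show "- a + a = 0"
    by (simp add: plus_qq_def zero_qq_def uminus_qq_def Abs_qq_inverse)
  show "a - b = a + - b"
    by (simp add: plus_qq_def minus_qq_def uminus_qq_def Abs_qq_inverse)
  show "a * b * c = a * (b * c)"
    by (simp add: times_qq_def Abs_qq_inverse pmul_def algebra_simps)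
  show "a * b = b * a"
    by (simp add: times_qq_def pmul_def algebra_simps)
  show "1 * a = a"
    by (simp add: times_qq_def one_qq_def Abs_qq_inverse pmul_def Rep_qq_inverse)
  show "(a + b) * c = a * c + b * c"
    by (simp add: times_qq_def plus_qq_def Abs_qq_inverse pmul_def algebra_simps)
  show "(0::qq) \<noteq> 1"
    by (simp add: zero_qq_def one_qq_def Abs_qq_inject fun_eq_iff)
qed
end

definition ev :: "int \<times> int \<Rightarrow> qq \<Rightarrow> int \<times> int" where "ev P x = Rep_qq x P"
definition qc :: "int \<Rightarrow> int \<Rightarrow> qq" where "qc a b = Abs_qq (\<lambda>Q. (a, b))"
definition qpi :: qq where "qpi = qc 0 1"

lemma ev_add[simp]: "ev P (x + y) = (fst (ev P x) + fst (ev P y), snd (ev P x) + snd (ev P y))"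
  by (simp add: ev_def plus_qq_def Abs_qq_inverse)
lemma ev_diff[simp]: "ev P (x - y) = (fst (ev P x) - fst (ev P y), snd (ev P x) - snd (ev P y))"
  by (simp add: ev_def minus_qq_def Abs_qq_inverse)
lemma ev_neg[simp]: "ev P (- x) = (- fst (ev P x), - snd (ev P x))"
  by (simp add: ev_def uminus_qq_def Abs_qq_inverse)
lemma ev_mult[simp]: "ev P (x * y) = pmul P (ev P x) (ev P y)"
  by (simp add: ev_def times_qq_def Abs_qq_inverse)
lemma ev_zero[simp]: "ev P 0 = (0, 0)"
  by (simp add: ev_def zero_qq_def Abs_qq_inverse)
lemma ev_one[simp]: "ev P 1 = (1, 0)"
  by (simp add: ev_def one_qq_def Abs_qq_inverse)
lemma ev_qc[simp]: "ev P (qc a b) = (a, b)"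
  by (simp add: ev_def qc_def Abs_qq_inverse)
lemma ev_of_nat[simp]: "ev P (of_nat k) = (int k, 0)"
  by (induction k) (simp_all add: pmul_def)
lemma ev_of_int[simp]: "ev P (of_int k) = (k, 0)"
  by (cases k rule: int_cases) (simp_all add: pmul_def)
lemma ev_numeral[simp]: "ev P (numeral k) = (numeral k, 0)"
  using ev_of_nat[of P "numeral k"] by simp


definition isid :: "(qq \<Rightarrow> bool) \<Rightarrow> bool" where
  "isid J \<longleftrightarrow> J 0 \<and> (\<forall>x y. J x \<longrightarrow> J y \<longrightarrow> J (x + y)) \<and> (\<forall>x. J x \<longrightarrow> J (- x)) \<and> (\<forall>x y. J x \<longrightarrow> J (x * y))"

lemma isid_0: "isid J \<Longrightarrow> J 0" by (simp add: isid_def)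
lemma isid_add: "isid J \<Longrightarrow> J x \<Longrightarrow> J y \<Longrightarrow> J (x + y)" by (simp add: isid_def)
lemma isid_neg: "isid J \<Longrightarrow> J x \<Longrightarrow> J (- x)" by (simp add: isid_def)
lemma isid_mult: "isid J \<Longrightarrow> J x \<Longrightarrow> J (x * y)" by (simp add: isid_def)
lemma isid_mult2: "isid J \<Longrightarrow> J y \<Longrightarrow> J (x * y)" by (metis isid_mult mult.commute)
lemma isid_diff: "isid J \<Longrightarrow> J x \<Longrightarrow> J y \<Longrightarrow> J (x - y)"
  by (metis isid_add isid_neg diff_conv_add_uminus)

definition cg :: "(qq \<Rightarrow> bool) \<Rightarrow> qq \<Rightarrow> qq \<Rightarrow> bool" where
  "cg J x y \<longleftrightarrow> J (x - y)"

lemma cg_refl[simp]: "isid J \<Longrightarrow> cg J x x" by (simp add: cg_def isid_0)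
lemma cg_sym: "isid J \<Longrightarrow> cg J x y \<Longrightarrow> cg J y x"
proof -
  assume "isid J" "cg J x y"
  then have "J (- (x - y))" unfolding cg_def by (rule isid_neg)
  then show ?thesis by (simp add: cg_def)
qed
lemma cg_trans: "isid J \<Longrightarrow> cg J x y \<Longrightarrow> cg J y z \<Longrightarrow> cg J x z"
proof -
  assume "isid J" "cg J x y" "cg J y z"
  then have "J ((x - y) + (y - z))" unfolding cg_def by (rule isid_add)
  moreover have "(x - y) + (y - z) = x - z" by simp
  ultimately show ?thesis by (simp add: cg_def)
qed
lemma cg_add: "isid J \<Longrightarrow> cg J x y \<Longrightarrow> cg J x' y' \<Longrightarrow> cg J (x + x') (y + y')"
proof -
  assume "isid J" "cg J x y" "cg J x' y'"
  then have "J ((x - y) + (x' - y'))" by (simp add: cg_def isid_add)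
  moreover have "(x - y) + (x' - y') = (x + x') - (y + y')" by (simp add: algebra_simps)
  ultimately show ?thesis by (simp add: cg_def)
qed
lemma cg_neg: "isid J \<Longrightarrow> cg J x y \<Longrightarrow> cg J (- x) (- y)"
proof -
  assume "isid J" "cg J x y"
  then have "J (- (x - y))" unfolding cg_def by (rule isid_neg)
  moreover have "- (x - y) = - x - - y" by simp
  ultimately show ?thesis by (simp only: cg_def)
qed
lemma cg_diff: "isid J \<Longrightarrow> cg J x y \<Longrightarrow> cg J x' y' \<Longrightarrow> cg J (x - x') (y - y')"
  by (metis cg_add cg_neg diff_conv_add_uminus)
lemma cg_mult: "isid J \<Longrightarrow> cg J x y \<Longrightarrow> cg J x' y' \<Longrightarrow> cg J (x * x') (y * y')"
proof -
  assume j: "isid J" "cg J x y" "cg J x' y'"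
  then have "J ((x - y) * x' + y * (x' - y'))"
    by (simp add: cg_def isid_add isid_mult isid_mult2)
  moreover have "(x - y) * x' + y * (x' - y') = x * x' - y * y'" by (simp add: algebra_simps)
  ultimately show ?thesis by (simp add: cg_def)
qed
lemma cg_power: "isid J \<Longrightarrow> cg J x y \<Longrightarrow> cg J (x ^ k) (y ^ k)"
  by (induction k) (simp_all add: cg_mult)
lemma cg_sum: "isid J \<Longrightarrow> (\<And>i. i \<in> A \<Longrightarrow> cg J (f i) (g i)) \<Longrightarrow> cg J (sum f A) (sum g A)"
  by (induction A rule: infinite_finite_induct) (simp_all add: cg_add)
lemma cg_multL: "isid J \<Longrightarrow> cg J x y \<Longrightarrow> cg J (c * x) (c * y)"
  by (simp add: cg_mult)
lemma cg_0_mult: "isid J \<Longrightarrow> cg J x 0 \<Longrightarrow> cg J (c * x) 0"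
  using cg_multL[of J x 0 c] by simp

definition dv :: "int \<times> int \<Rightarrow> int \<Rightarrow> qq \<Rightarrow> bool" where
  "dv P k w \<longleftrightarrow> k dvd fst (ev P w) \<and> k dvd snd (ev P w)"

lemma isid_dv: "isid (dv P k)"
  unfolding isid_def dv_def by (auto simp: pmul_def)

definition dI :: "int \<times> int \<Rightarrow> qq \<Rightarrow> bool" where
  "dI P w \<longleftrightarrow> 8 dvd fst (ev P w) \<and> 4 dvd snd (ev P w)"

lemma isid_dI: assumes "even (snd P)" shows "isid (dI P)"
proof -
  have "8 dvd a * c - snd P * (b * e) \<and> 4 dvd a * e + b * c + fst P * (b * e)"
    if "8 dvd a" "4 dvd b" for a b c e :: int
  proof -
    from that(1) obtain a' where a: "a = 8 * a'" by (auto simp: dvd_def)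
    from that(2) obtain b' where b: "b = 4 * b'" by (auto simp: dvd_def)
    from assms obtain p where p: "snd P = 2 * p" by (auto simp: dvd_def)
    have 1: "a * c - snd P * (b * e) = 8 * (a' * c - p * b' * e)" unfolding a b p by (simp add: algebra_simps)
    have 2: "a * e + b * c + fst P * (b * e) = 4 * (2 * a' * e + b' * c + fst P * b' * e)" unfolding a b p by (simp add: algebra_simps)
    show ?thesis unfolding 1 2 by simp
  qed
  then show ?thesis unfolding isid_def dI_def by (auto simp: pmul_def)
qed

abbreviation cgn :: "int \<times> int \<Rightarrow> nat \<Rightarrow> qq \<Rightarrow> qq \<Rightarrow> bool" where
  "cgn P n \<equiv> cg (dv P (2 ^ n))"

lemma dv_mono: "dv P (2 ^ Suc n) w \<Longrightarrow> dv P (2 ^ n) w"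
  unfolding dv_def by (meson dvd_trans le_imp_power_dvd le_SucI order_refl)
lemma dv_mono_le: "n \<le> k \<Longrightarrow> dv P (2 ^ k) w \<Longrightarrow> dv P (2 ^ n) w"
  unfolding dv_def by (meson dvd_trans le_imp_power_dvd)
lemma cgn_mono: "n \<le> k \<Longrightarrow> cgn P k x y \<Longrightarrow> cgn P n x y"
  unfolding cg_def using dv_mono_le by blast
lemma cgn0[simp]: "cgn P 0 x y" by (simp add: cg_def dv_def)

lemma cgn_3_dI: "cgn P 3 x y \<Longrightarrow> cg (dI P) x y"
  unfolding cg_def dv_def dI_def by (auto elim: dvd_trans[rotated])


definition L :: "nat \<Rightarrow> oelt \<Rightarrow> qq" where "L n u = qc (fst u n) (snd u n)"

lemma ev_L[simp]: "ev P (L n u) = (fst u n, snd u n)" by (simp add: L_def)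

lemma cgn_iff: "cgn P n x y \<longleftrightarrow> fst (ev P x) mod 2^n = fst (ev P y) mod 2^n \<and> snd (ev P x) mod 2^n = snd (ev P y) mod 2^n"
  by (simp add: cg_def dv_def mod_eq_dvd_iff)

lemma qc_0[simp]: "qc 0 0 = 0" by (simp add: qc_def zero_qq_def)
lemma qc_1[simp]: "qc 1 0 = 1" by (simp add: qc_def one_qq_def)

lemma L_add: "cgn P n (L n (o_add u v)) (L n u + L n v)"
  by (simp add: cgn_iff o_add_def z2_add_def)

lemma L_neg: "cgn P n (L n (o_neg u)) (- L n u)"
  by (simp add: cgn_iff o_neg_def z2_neg_def mod_simps)

lemma L_sub: "cgn P n (L n (o_sub u v)) (L n u - L n v)"
proof -
  have "cgn P n (L n (o_add u (o_neg v))) (L n u + L n (o_neg v))" by (rule L_add)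
  moreover have "cgn P n (L n u + L n (o_neg v)) (L n u + - L n v)"
    by (rule cg_add[OF isid_dv]) (simp_all add: isid_dv L_neg)
  ultimately show ?thesis unfolding o_sub_def by (metis cg_trans isid_dv diff_conv_add_uminus)
qed

lemma L_mul: "cgn P n (L n (o_mul P u v)) (L n u * L n v)"
proof -
  let ?M = "(2::int)^n"
  have 1: "((a * c) mod ?M + (- ((t mod ?M) * ((b * e) mod ?M) mod ?M)) mod ?M) mod ?M = (a * c - t * (b * e)) mod ?M"
    for a b c e t :: int by (metis mod_add_eq mod_minus_eq mod_mult_eq diff_conv_add_uminus)
  have 2: "(((a * e) mod ?M + (b * c) mod ?M) mod ?M + (t mod ?M) * ((b * e) mod ?M) mod ?M) mod ?M = (a * e + b * c + t * (b * e)) mod ?M"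
    for a b c e t :: int by (metis mod_add_eq mod_mult_eq)
  show ?thesis
    by (simp add: cgn_iff o_mul_def z2_add_def z2_mul_def z2_neg_def z2_of_int_def Let_def pmul_def 1 2)
qed

lemma L_const: "cgn P n (L n (z2_of_int a, z2_of_int b)) (qc a b)"
  by (simp add: cgn_iff z2_of_int_def)

lemma L_zero[simp]: "L n o_zero = 0"
  by (simp add: o_zero_def L_def z2_of_int_def)

lemma L_one: "cgn P n (L n o_one) 1"
  using L_const[of P n 1 0] by (simp add: o_one_def)

lemma L_pi: "cgn P n (L n o_pi) qpi"
  using L_const[of P n 0 1] by (simp add: o_pi_def qpi_def)

lemma L_pow: "cgn P n (L n (o_pow P u k)) (L n u ^ k)"
proof (induction k)
  case 0 then show ?case by (simp add: L_one)
next
  case (Suc k)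
  have "cgn P n (L n (o_mul P (o_pow P u k) u)) (L n (o_pow P u k) * L n u)" by (rule L_mul)
  moreover have "cgn P n (L n (o_pow P u k) * L n u) (L n u ^ k * L n u)"
    by (rule cg_mult[OF isid_dv Suc]) (simp add: isid_dv)
  ultimately show ?case by (simp add: mult.commute cg_trans[OF isid_dv])
qed

lemma L_sum: "cgn P n (L n (o_sum f k)) (\<Sum>i<k. L n (f i))"
proof (induction k)
  case 0 then show ?case by (simp add: isid_dv)
next
  case (Suc k)
  have "cgn P n (L n (o_add (o_sum f k) (f k))) (L n (o_sum f k) + L n (f k))" by (rule L_add)
  moreover have "cgn P n (L n (o_sum f k) + L n (f k)) ((\<Sum>i<k. L n (f i)) + L n (f k))"
    by (rule cg_add[OF isid_dv Suc]) (simp add: isid_dv)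
  ultimately show ?case by (simp add: cg_trans[OF isid_dv])
qed

lemma Z2_mod: "x \<in> Z2 \<Longrightarrow> x (n + k) mod 2 ^ n = x n"
proof (induction k)
  case 0 then show ?case unfolding Z2_def by simp
next
  case (Suc k)
  have h: "x (Suc (n + k)) mod 2 ^ (n + k) = x (n + k)" using Suc.prems unfolding Z2_def by blast
  have d: "(2::int) ^ n dvd 2 ^ (n + k)" by (simp add: le_imp_power_dvd)
  have "x (Suc (n + k)) mod 2 ^ n = x (Suc (n + k)) mod 2 ^ (n + k) mod 2 ^ n"
    using mod_mod_cancel[OF d] by simp
  also have "\<dots> = x n" using h Suc by simp
  finally show ?case by simp
qed

lemma Z2_mod_le: "x \<in> Z2 \<Longrightarrow> n \<le> k \<Longrightarrow> x k mod 2 ^ n = x n"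
  using Z2_mod[of x n "k - n"] by simp

lemma Z2_I: "(\<And>n. 0 \<le> x n \<and> x n < 2 ^ n) \<Longrightarrow> (\<And>n. x (Suc n) mod 2 ^ n = x n) \<Longrightarrow> x \<in> Z2"
  unfolding Z2_def by blast

lemma Z2_step: "x \<in> Z2 \<Longrightarrow> x (Suc n) mod 2 ^ n = x n" unfolding Z2_def by blast

lemma mod_pow_suc: "(a::int) mod (2 * 2 ^ n) mod 2 ^ n = a mod 2 ^ n"
  by (rule mod_mod_cancel) simp

lemma Z2_red: "x \<in> Z2 \<Longrightarrow> x n mod 2 ^ n = x n"
  unfolding Z2_def by simp

lemma z2_add_Z2: assumes "x \<in> Z2" "y \<in> Z2" shows "z2_add x y \<in> Z2"
proof (rule Z2_I)
  fix n
  show "0 \<le> z2_add x y n \<and> z2_add x y n < 2 ^ n" by (simp add: z2_add_def)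
  have "(x (Suc n) + y (Suc n)) mod 2 ^ n = (x (Suc n) mod 2 ^ n + y (Suc n) mod 2 ^ n) mod 2 ^ n"
    by (simp add: mod_add_eq)
  also have "\<dots> = (x n + y n) mod 2 ^ n" using Z2_step[OF assms(1)] Z2_step[OF assms(2)] by simp
  finally show "z2_add x y (Suc n) mod 2 ^ n = z2_add x y n" by (simp add: z2_add_def mod_pow_suc)
qed

lemma z2_mul_Z2: assumes "x \<in> Z2" "y \<in> Z2" shows "z2_mul x y \<in> Z2"
proof (rule Z2_I)
  fix n
  show "0 \<le> z2_mul x y n \<and> z2_mul x y n < 2 ^ n" by (simp add: z2_mul_def)
  have "(x (Suc n) * y (Suc n)) mod 2 ^ n = (x (Suc n) mod 2 ^ n * (y (Suc n) mod 2 ^ n)) mod 2 ^ n"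
    by (simp add: mod_mult_eq)
  also have "\<dots> = (x n * y n) mod 2 ^ n" using Z2_step[OF assms(1)] Z2_step[OF assms(2)] by simp
  finally show "z2_mul x y (Suc n) mod 2 ^ n = z2_mul x y n" by (simp add: z2_mul_def mod_pow_suc)
qed

lemma z2_neg_Z2: assumes "x \<in> Z2" shows "z2_neg x \<in> Z2"
proof (rule Z2_I)
  fix n
  show "0 \<le> z2_neg x n \<and> z2_neg x n < 2 ^ n" by (simp add: z2_neg_def)
  have "(- x (Suc n)) mod 2 ^ n = (- (x (Suc n) mod 2 ^ n)) mod 2 ^ n"
    by (simp add: mod_minus_eq)
  also have "\<dots> = (- x n) mod 2 ^ n" using Z2_step[OF assms(1)] by simp
  finally show "z2_neg x (Suc n) mod 2 ^ n = z2_neg x n" by (simp add: z2_neg_def mod_pow_suc)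
qed

lemma z2_of_int_Z2: "z2_of_int k \<in> Z2"
  apply (rule Z2_I)
   apply (simp add: z2_of_int_def)
  by (simp add: z2_of_int_def mod_pow_suc)

lemma o_add_O: "u \<in> O_carrier \<Longrightarrow> v \<in> O_carrier \<Longrightarrow> o_add u v \<in> O_carrier"
  by (auto simp: O_carrier_def o_add_def z2_add_Z2 mem_Times_iff)
lemma o_mul_O: "u \<in> O_carrier \<Longrightarrow> v \<in> O_carrier \<Longrightarrow> o_mul P u v \<in> O_carrier"
  by (auto simp: O_carrier_def o_mul_def Let_def z2_add_Z2 z2_mul_Z2 z2_neg_Z2 z2_of_int_Z2 mem_Times_iff)
lemma o_const_O: "(z2_of_int a, z2_of_int b) \<in> O_carrier"
  by (simp add: O_carrier_def z2_of_int_Z2)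
lemma o_zero_O: "o_zero \<in> O_carrier" by (simp add: o_zero_def o_const_O)
lemma o_one_O: "o_one \<in> O_carrier" by (simp add: o_one_def o_const_O)
lemma o_pi_O: "o_pi \<in> O_carrier" by (simp add: o_pi_def o_const_O)
lemma o_pow_O: "u \<in> O_carrier \<Longrightarrow> o_pow P u k \<in> O_carrier"
  by (induction k) (simp_all add: o_one_O o_mul_O)

lemma L_compat: "u \<in> O_carrier \<Longrightarrow> cgn P n (L (Suc n) u) (L n u)"
  by (auto simp: cgn_iff O_carrier_def mem_Times_iff Z2_step Z2_red)

lemma L_compat_le: "u \<in> O_carrier \<Longrightarrow> n \<le> k \<Longrightarrow> cgn P n (L k u) (L n u)"
  by (auto simp: cgn_iff O_carrier_def mem_Times_iff Z2_mod_le Z2_red)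

lemma O_eq_iff: assumes "u \<in> O_carrier" "v \<in> O_carrier" "\<And>n. cgn P n (L n u) (L n v)"
  shows "u = v"
proof -
  have "fst u n = fst v n \<and> snd u n = snd v n" for n
  proof -
    have r: "fst u n mod 2^n = fst u n" "snd u n mod 2^n = snd u n" "fst v n mod 2^n = fst v n" "snd v n mod 2^n = snd v n"
      using assms(1,2) by (auto simp: O_carrier_def mem_Times_iff Z2_def)
    show ?thesis using assms(3)[of n] r by (simp add: cgn_iff)
  qed
  then show ?thesis by (simp add: prod_eq_iff fun_eq_iff)
qed


definition evP :: "int \<times> int \<Rightarrow> bool" where "evP P \<longleftrightarrow> even (fst P) \<and> even (snd P)"
definition odq :: "int \<times> int \<Rightarrow> qq \<Rightarrow> bool" where "odq P x \<longleftrightarrow> odd (fst (ev P x))"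

lemma odq_mult: "evP P \<Longrightarrow> odq P x \<Longrightarrow> odq P y \<Longrightarrow> odq P (x * y)"
  by (auto simp: evP_def odq_def pmul_def)

lemma odd_inv_mod: assumes "odd (N::int)" shows "\<exists>N'. (2::int) ^ n dvd N * N' - 1"
proof -
  have "coprime N 2" using assms by simp
  then have "coprime N ((2::int) ^ n)" by simp
  then have "gcd N ((2::int) ^ n) = 1" by simp
  then obtain u v where "u * N + v * 2 ^ n = 1" using bezout_int[of N "(2::int)^n"] by auto
  then have "N * u - 1 = 2 ^ n * (- v)" by (simp add: algebra_simps)
  then show ?thesis by (metis dvd_triv_left)
qed

lemma odq_unit: assumes "evP P" "odq P x" shows "\<exists>y. cgn P n (x * y) 1"
proof -
  obtain a b where ab: "ev P x = (a, b)" by (cases "ev P x")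
  define N where "N = a * a + fst P * a * b + snd P * b * b"
  have oa: "odd a" using assms(2) ab by (simp add: odq_def)
  have "odd N" using oa assms(1) by (simp add: N_def evP_def)
  then obtain N' where N': "(2::int) ^ n dvd N * N' - 1" using odd_inv_mod by blast
  define y where "y = qc (a + b * fst P) (- b) * of_int N'"
  have "ev P (x * y) = (N * N', 0)"
    by (simp add: y_def ab pmul_def N_def algebra_simps)
  then have "cgn P n (x * y) 1" using N' by (simp add: cg_def dv_def)
  then show ?thesis by blast
qed

lemma odq_cancel: assumes "evP P" "odq P U" "cgn P n (w * U) 0" shows "cgn P n w 0"
proof -
  obtain V where V: "cgn P n (U * V) 1" using odq_unit[OF assms(1,2)] by blast
  have "cgn P n (w * (U * V)) (w * 1)" by (rule cg_multL[OF isid_dv V])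
  moreover have "cgn P n ((w * U) * V) (0 * V)" by (rule cg_mult[OF isid_dv assms(3)]) (simp add: isid_dv)
  ultimately show ?thesis
    by (metis cg_sym cg_trans isid_dv mult.assoc mult_1_right mult_zero_left)
qed

definition Rn :: "nat \<Rightarrow> (int \<times> int) set" where
  "Rn n = {r. 0 \<le> fst r \<and> fst r < 2 ^ n \<and> 0 \<le> snd r \<and> snd r < 2 ^ n}"

definition qp :: "int \<times> int \<Rightarrow> qq" where "qp r = qc (fst r) (snd r)"
lemma ev_qp[simp]: "ev P (qp r) = r" by (simp add: qp_def)

lemma Rn_finite: "finite (Rn n)"
proof -
  have "Rn n \<subseteq> {0..<2^n} \<times> {0..<2^n}" by (auto simp: Rn_def)
  then show ?thesis by (rule finite_subset) simp
qed

lemma Rn_eq: "r \<in> Rn n \<Longrightarrow> r' \<in> Rn n \<Longrightarrow> cgn P n (qp r) (qp r') \<Longrightarrow> r = r'"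
  by (auto simp: Rn_def cgn_iff prod_eq_iff)

definition md :: "nat \<Rightarrow> int \<times> int \<Rightarrow> int \<times> int" where
  "md n r = (fst r mod 2 ^ n, snd r mod 2 ^ n)"

lemma md_Rn: "md n r \<in> Rn n" by (simp add: md_def Rn_def)
lemma md_cg: "cgn P n (qp (md n r)) (qp r)" by (simp add: md_def cgn_iff)

lemma solve_level:
  assumes eP: "evP P"
    and resp: "\<And>z z'. cgn P n z z' \<Longrightarrow> cgn P n (\<phi> z) (\<phi> z')"
    and dif: "n \<ge> 1 \<Longrightarrow> (\<And>z z'. \<exists>U. odq P U \<and> \<phi> z - \<phi> z' = (z - z') * U)"
  shows "\<exists>!r. r \<in> Rn n \<and> cgn P n (\<phi> (qp r)) 0"
proof -
  define F where "F r = md n (ev P (\<phi> (qp r)))" for r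
  have inj: "r = r'" if "r \<in> Rn n" "r' \<in> Rn n" "cgn P n (\<phi> (qp r)) (\<phi> (qp r'))" for r r'
  proof (cases "n = 0")
    case True then show ?thesis using that by (auto simp: Rn_def prod_eq_iff)
  next
    case False
    then obtain U where U: "odq P U" "\<phi> (qp r) - \<phi> (qp r') = (qp r - qp r') * U" using dif by fastforce
    have "cgn P n ((qp r - qp r') * U) 0" using that(3) U(2) by (simp add: cg_def)
    then have "cgn P n (qp r - qp r') 0" by (rule odq_cancel[OF eP U(1)])
    then have "cgn P n (qp r) (qp r')" by (simp add: cg_def)
    then show ?thesis using Rn_eq that by blast
  qed
  have Fcg: "cgn P n (qp (F r)) (\<phi> (qp r))" for r
    unfolding F_def by (simp add: cgn_iff md_def)
  have "inj_on F (Rn n)"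
  proof (rule inj_onI)
    fix r r' assume h: "r \<in> Rn n" "r' \<in> Rn n" "F r = F r'"
    have "cgn P n (\<phi> (qp r)) (\<phi> (qp r'))"
      by (metis Fcg h(3) cg_sym cg_trans isid_dv)
    then show "r = r'" using inj h by blast
  qed
  moreover have "F ` Rn n \<subseteq> Rn n" by (auto simp: F_def md_Rn)
  ultimately have "F ` Rn n = Rn n" using endo_inj_surj Rn_finite by blast
  moreover have "(0, 0) \<in> Rn n" by (simp add: Rn_def)
  ultimately obtain r where r: "r \<in> Rn n" "F r = (0, 0)" by (metis imageE)
  have "cgn P n (\<phi> (qp r)) 0"
    by (metis Fcg r(2) cg_sym isid_dv qp_def qc_0 fst_conv snd_conv)
  moreover have "r' = r" if "r' \<in> Rn n" "cgn P n (\<phi> (qp r')) 0" for r'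
  proof -
    have "cgn P n (\<phi> (qp r')) (\<phi> (qp r))"
      by (metis \<open>cgn P n (\<phi> (qp r)) 0\<close> that(2) cg_sym cg_trans isid_dv)
    then show ?thesis using inj that(1) r(1) by blast
  qed
  ultimately show ?thesis using r(1) by blast
qed

lemma solve:
  fixes \<phi> :: "nat \<Rightarrow> qq \<Rightarrow> qq"
  assumes eP: "evP P"
    and resp: "\<And>n z z'. cgn P n z z' \<Longrightarrow> cgn P n (\<phi> n z) (\<phi> n z')"
    and comp: "\<And>n z. cgn P n (\<phi> (Suc n) z) (\<phi> n z)"
    and dif: "\<And>n z z'. n \<ge> 1 \<Longrightarrow> \<exists>U. odq P U \<and> \<phi> n z - \<phi> n z' = (z - z') * U"
  shows "\<exists>z \<in> O_carrier. \<forall>n. cgn P n (\<phi> n (L n z)) 0"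
proof -
  have ex: "\<exists>!r. r \<in> Rn n \<and> cgn P n (\<phi> n (qp r)) 0" for n
    by (rule solve_level[OF eP]) (auto intro: resp dif)
  define rt where "rt n = (THE r. r \<in> Rn n \<and> cgn P n (\<phi> n (qp r)) 0)" for n
  have rt: "rt n \<in> Rn n \<and> cgn P n (\<phi> n (qp (rt n))) 0" for n
    unfolding rt_def using theI'[OF ex] by blast
  have rt_u: "r = rt n" if "r \<in> Rn n" "cgn P n (\<phi> n (qp r)) 0" for r n
    using ex[of n] rt[of n] that by blast
  have compat: "md n (rt (Suc n)) = rt n" for n
  proof (rule rt_u)
    show "md n (rt (Suc n)) \<in> Rn n" by (rule md_Rn)
    have 1: "cgn P n (\<phi> n (qp (md n (rt (Suc n))))) (\<phi> n (qp (rt (Suc n))))"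
      by (rule resp) (rule md_cg)
    have 2: "cgn P n (\<phi> n (qp (rt (Suc n)))) (\<phi> (Suc n) (qp (rt (Suc n))))"
      by (rule cg_sym[OF isid_dv comp])
    have 3: "cgn P n (\<phi> (Suc n) (qp (rt (Suc n)))) 0"
      using rt[of "Suc n"] cgn_mono[of n "Suc n"] by auto
    show "cgn P n (\<phi> n (qp (md n (rt (Suc n))))) 0"
      using 1 2 3 by (meson cg_trans isid_dv)
  qed
  define z where "z = (\<lambda>n. fst (rt n), \<lambda>n. snd (rt n))"
  have "fst z \<in> Z2" "snd z \<in> Z2"
    using rt compat by (auto simp: Z2_def z_def Rn_def md_def prod_eq_iff)
  then have zO: "z \<in> O_carrier" by (simp add: O_carrier_def mem_Times_iff)
  have Lz: "L n z = qp (rt n)" for n by (simp add: L_def z_def qp_def)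
  show ?thesis
  proof (rule bexI[OF _ zO], rule allI)
    fix n show "cgn P n (\<phi> n (L n z)) 0" unfolding Lz using rt[of n] by blast
  qed
qed


definition gc :: "nat \<Rightarrow> nat \<Rightarrow> qq" where
  "gc m j = of_nat (2 * m choose j) * 2 ^ (j - 2) * qpi ^ (j - 2)"

definition gH :: "nat \<Rightarrow> qq \<Rightarrow> qq" where
  "gH m z = of_nat m * z + qpi * (\<Sum>j\<in>{2..2*m}. gc m j * z ^ j)"

definition gD :: "nat \<Rightarrow> qq \<Rightarrow> qq \<Rightarrow> qq" where
  "gD m z z' = of_nat m + qpi * (\<Sum>j\<in>{2..2*m}. gc m j * (\<Sum>i<j. z' ^ (j - Suc i) * z ^ i))"

lemma gH_diff: "gH m z - gH m z' = (z - z') * gD m z z'"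
proof -
  have "(\<Sum>j\<in>{2..2*m}. gc m j * z ^ j) - (\<Sum>j\<in>{2..2*m}. gc m j * z' ^ j)
      = (\<Sum>j\<in>{2..2*m}. gc m j * (z ^ j - z' ^ j))"
    by (simp add: sum_subtractf algebra_simps)
  also have "\<dots> = (\<Sum>j\<in>{2..2*m}. (z - z') * (gc m j * (\<Sum>i<j. z' ^ (j - Suc i) * z ^ i)))"
    by (rule sum.cong) (simp_all add: power_diff_sumr2 algebra_simps)
  also have "\<dots> = (z - z') * (\<Sum>j\<in>{2..2*m}. gc m j * (\<Sum>i<j. z' ^ (j - Suc i) * z ^ i))"
    by (simp add: sum_distrib_left)
  finally have h: "(\<Sum>j\<in>{2..2*m}. gc m j * z ^ j) - (\<Sum>j\<in>{2..2*m}. gc m j * z' ^ j)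
      = (z - z') * (\<Sum>j\<in>{2..2*m}. gc m j * (\<Sum>i<j. z' ^ (j - Suc i) * z ^ i))" .
  have "gH m z - gH m z' = of_nat m * (z - z') + qpi * ((\<Sum>j\<in>{2..2*m}. gc m j * z ^ j) - (\<Sum>j\<in>{2..2*m}. gc m j * z' ^ j))"
    by (simp add: gH_def algebra_simps)
  also have "\<dots> = (z - z') * gD m z z'"
    unfolding h gD_def by (simp add: algebra_simps)
  finally show ?thesis .
qed

lemma gH_id: assumes "m \<ge> 1" shows "1 + 4 * qpi * gH m z = (1 + 2 * qpi * z) ^ (2 * m)"
proof -
  let ?d = "2 * m"
  have "(1 + 2 * qpi * z) ^ ?d = (2 * qpi * z + 1) ^ ?d" by (simp add: add.commute)
  also have "\<dots> = (\<Sum>k\<le>?d. of_nat (?d choose k) * (2 * qpi * z) ^ k)"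
    by (simp add: binomial_ring)
  also have "\<dots> = (\<Sum>k\<in>{0,1} \<union> {2..?d}. of_nat (?d choose k) * (2 * qpi * z) ^ k)"
  proof -
    have "{..?d} = {0,1} \<union> {2..?d}" using assms by auto
    then show ?thesis by simp
  qed
  also have "\<dots> = 1 + of_nat ?d * (2 * qpi * z) + (\<Sum>k\<in>{2..?d}. of_nat (?d choose k) * (2 * qpi * z) ^ k)"
    by (subst sum.union_disjoint) auto
  also have "(\<Sum>k\<in>{2..?d}. of_nat (?d choose k) * (2 * qpi * z) ^ k) = (\<Sum>k\<in>{2..?d}. 4 * qpi * (qpi * (gc m k * z ^ k)))"
  proof (rule sum.cong)
    fix k assume "k \<in> {2..?d}"
    then have k: "k = Suc (Suc (k - 2))" by auto
    show "of_nat (?d choose k) * (2 * qpi * z) ^ k = 4 * qpi * (qpi * (gc m k * z ^ k))"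
      unfolding gc_def by (subst (1 2) k) (simp add: power_mult_distrib algebra_simps)
  qed simp
  also have "\<dots> = 4 * qpi * (qpi * (\<Sum>j\<in>{2..?d}. gc m j * z ^ j))"
    by (simp add: sum_distrib_left)
  finally show ?thesis by (simp add: gH_def algebra_simps)
qed

lemma odq_gD: assumes "evP P" "odd m" shows "odq P (gD m z z')"
proof -
  have "even (fst (ev P (qpi * w)))" for w using assms(1) by (simp add: qpi_def pmul_def evP_def)
  then show ?thesis using assms(2) by (simp add: gD_def odq_def)
qed


lemma odq_pow: assumes "evP P" "odq P x" shows "odq P (x ^ k)"
proof (induction k)
  case 0 show ?case by (simp add: odq_def)
next
  case (Suc k) then show ?case using odq_mult[OF assms(1) assms(2) Suc] by simp
qed

lemma odq_of_int: "odd k \<Longrightarrow> odq P (of_int k)" by (simp add: odq_def)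

lemma dvd_chain: "(k::int) dvd a - b \<Longrightarrow> k dvd b - c \<Longrightarrow> k dvd a - c"
proof -
  assume "k dvd a - b" "k dvd b - c"
  then have "k dvd (a - b) + (b - c)" by (rule dvd_add)
  then show ?thesis by simp
qed

lemma cg_family: assumes "\<And>n. cgn P n (T (Suc n)) (T n)" shows "n \<le> k \<Longrightarrow> cgn P n (T k) (T n)"
proof (induction k)
  case 0 then show ?case by (simp add: isid_dv)
next
  case (Suc k)
  show ?case
  proof (cases "n = Suc k")
    case True then show ?thesis by (simp add: isid_dv)
  next
    case False
    then have "n \<le> k" using Suc.prems by simp
    have "cgn P n (T (Suc k)) (T k)" using assms[of k] cgn_mono[of n k] \<open>n \<le> k\<close> by blast
    then show ?thesis using Suc.IH \<open>n \<le> k\<close> by (meson cg_trans isid_dv)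
  qed
qed

lemma div_family:
  fixes A :: "nat \<Rightarrow> int" and s :: nat
  assumes comp: "\<And>n. (2::int) ^ n dvd A (Suc n) - A n"
    and base: "(2::int) ^ s dvd A s"
  defines "a' \<equiv> \<lambda>n. (A (n + s) mod 2 ^ (n + s)) div 2 ^ s"
  shows "\<And>n. (2::int) ^ n dvd 2 ^ s * a' n - A n"
    and "\<And>n. (2::int) ^ n dvd a' (Suc n) - a' n"
proof -
  have fam: "(2::int) ^ n dvd A k - A n" if "n \<le> k" for n k
    using that
  proof (induction k)
    case 0 then show ?case by simp
  next
    case (Suc k)
    show ?case
    proof (cases "n = Suc k")
      case True then show ?thesis by simp
    next
      case False
      then have nk: "n \<le> k" using Suc.prems by simp
      have "(2::int) ^ n dvd A (Suc k) - A k"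
        using comp[of k] nk by (meson dvd_trans le_imp_power_dvd)
      then have "(2::int) ^ n dvd (A (Suc k) - A k) + (A k - A n)" using Suc.IH[OF nk] by (rule dvd_add)
      moreover have "(A (Suc k) - A k) + (A k - A n) = A (Suc k) - A n" by simp
      ultimately show ?thesis by metis
    qed
  qed
  have sdvd: "(2::int) ^ s dvd A (n + s) mod 2 ^ (n + s)" for n
  proof -
    have "(2::int) ^ s dvd A (n + s)" using fam[of s "n + s"] base by (metis dvd_diff_right_iff add.commute le_add2 dvd_add_left_iff diff_add_cancel dvd_add)
    moreover have "(2::int) ^ s dvd 2 ^ (n + s)" by (simp add: le_imp_power_dvd)
    ultimately show ?thesis by (simp add: dvd_mod)
  qed
  have ma: "2 ^ s * a' n = A (n + s) mod 2 ^ (n + s)" for n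
    unfolding a'_def using sdvd[of n] by simp
  show "(2::int) ^ n dvd 2 ^ s * a' n - A n" for n
  proof -
    have "(2::int) ^ n dvd A (n + s) mod 2 ^ (n + s) - A (n + s)"
    proof -
      have "(2::int) ^ (n + s) dvd A (n + s) mod 2 ^ (n + s) - A (n + s)"
        by (simp add: mod_eq_dvd_iff[symmetric])
      then show ?thesis by (meson dvd_trans le_add1 le_imp_power_dvd)
    qed
    moreover have "(2::int) ^ n dvd A (n + s) - A n" using fam by simp
    ultimately have "(2::int) ^ n dvd A (n + s) mod 2 ^ (n + s) - A n"
      by (rule dvd_chain)
    then show ?thesis using ma by simp
  qed
  show "(2::int) ^ n dvd a' (Suc n) - a' n" for n
  proof -
    have "(2::int) ^ (n + s) dvd A (Suc n + s) mod 2 ^ (Suc n + s) - A (Suc n + s)"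
    proof -
      have "(2::int) ^ (Suc n + s) dvd A (Suc n + s) mod 2 ^ (Suc n + s) - A (Suc n + s)"
        by (simp add: mod_eq_dvd_iff[symmetric])
      then show ?thesis by (meson dvd_trans le_add1 le_imp_power_dvd Suc_le_mono add_le_mono1 le_SucI order_refl)
    qed
    moreover have "(2::int) ^ (n + s) dvd A (Suc n + s) - A (n + s)" using fam by simp
    moreover have "(2::int) ^ (n + s) dvd A (n + s) - A (n + s) mod 2 ^ (n + s)"
      by (simp add: mod_eq_dvd_iff[symmetric])
    ultimately have "(2::int) ^ (n + s) dvd A (Suc n + s) mod 2 ^ (Suc n + s) - A (n + s) mod 2 ^ (n + s)"
      by (meson dvd_chain)
    then have "(2::int) ^ (n + s) dvd 2 ^ s * a' (Suc n) - 2 ^ s * a' n" using ma[of n] ma[of "Suc n"] by simp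
    then have "(2::int) ^ n * 2 ^ s dvd 2 ^ s * (a' (Suc n) - a' n)" by (simp add: power_add algebra_simps)
    then show ?thesis by (simp add: mult.commute)
  qed
qed


lemma ev_4pi_qc: "ev P (4 * qpi * qc x y) = (- 4 * snd P * y, 4 * x + 4 * fst P * y)"
  by (simp add: qpi_def pmul_def)

lemma hensel:
  fixes c :: "nat \<Rightarrow> nat \<Rightarrow> qq" and yh :: "nat \<Rightarrow> qq"
  assumes eP: "evP P" and oo: "snd P = 2 * oo" "odd oo"
    and m: "odd m"
    and ccomp: "\<And>n k. cgn P n (c (Suc n) k) (c n k)"
    and h: "h < 5" and codd: "\<And>n. n \<ge> 1 \<Longrightarrow> odq P (c n h)" and yodd: "odq P (yh h)"
    and T3: "dI P (\<Sum>k<5. c 3 k * yh k ^ (2 * m))"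
  shows "\<exists>z\<in>O_carrier. \<forall>n. cgn P n (\<Sum>k<5. c n k * (if k = h then yh h * (1 + 2 * qpi * L n z) else yh k) ^ (2 * m)) 0"
proof -
  let ?d = "2 * m"
  have m1: "m \<ge> 1" using m by (cases m) auto
  have iJ: "isid (dv P (2 ^ n))" for n by (rule isid_dv)
  have iI: "isid (dI P)" using eP by (intro isid_dI) (simp add: evP_def)
  define T where "T n = (\<Sum>k<5. c n k * yh k ^ ?d)" for n
  have Tcomp: "cgn P n (T (Suc n)) (T n)" for n
    unfolding T_def by (intro cg_sum[OF iJ] cg_mult[OF iJ] ccomp) (simp add: iJ)
  define A where "A n = fst (ev P (T n))" for n
  define B where "B n = snd (ev P (T n))" for n
  have Acomp: "(2::int) ^ n dvd A (Suc n) - A n" and Bcomp: "(2::int) ^ n dvd B (Suc n) - B n" for n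
    using Tcomp[of n] by (simp_all add: A_def B_def cg_def dv_def)
  have A3: "(2::int) ^ 3 dvd A 3" using T3 by (simp add: A_def T_def dI_def)
  have B2: "(2::int) ^ 2 dvd B 2"
  proof -
    have "(4::int) dvd B 3" using T3 by (simp add: B_def T_def dI_def)
    moreover have "(4::int) dvd B 3 - B 2" using Bcomp[of 2] by simp
    ultimately show ?thesis by (simp add: dvd_diff_right_iff)
  qed
  define a' where "a' n = (A (n + 3) mod 2 ^ (n + 3)) div 2 ^ 3" for n
  define b' where "b' n = (B (n + 2) mod 2 ^ (n + 2)) div 2 ^ 2" for n
  have a1: "(2::int) ^ n dvd 2 ^ 3 * a' n - A n" and a2: "(2::int) ^ n dvd a' (Suc n) - a' n" for n
    using div_family[of A 3, OF Acomp A3] unfolding a'_def by blast+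
  have b1: "(2::int) ^ n dvd 2 ^ 2 * b' n - B n" and b2: "(2::int) ^ n dvd b' (Suc n) - b' n" for n
    using div_family[of B 2, OF Bcomp B2] unfolding b'_def by blast+
  define X where "X n = qc (oo * b' n + fst P * a' n) (- a' n)" for n
  have claim1: "cgn P n (of_int oo * T n) (4 * qpi * X n)" for n
  proof -
    have e1: "ev P (of_int oo * T n) = (oo * A n, oo * B n)" by (simp add: A_def B_def pmul_def)
    have e2: "ev P (4 * qpi * X n) = (oo * (8 * a' n), oo * (4 * b' n))"
      unfolding X_def ev_4pi_qc oo by (simp add: algebra_simps)
    have "(2::int) ^ n dvd oo * A n - oo * (8 * a' n)"
    proof -
      have "(2::int) ^ n dvd 8 * a' n - A n" using a1[of n] by simp
      then have "(2::int) ^ n dvd oo * (8 * a' n - A n)" by (rule dvd_mult)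
      moreover have "oo * A n - oo * (8 * a' n) = - (oo * (8 * a' n - A n))" by (simp add: algebra_simps)
      ultimately show ?thesis by (simp only: dvd_minus_iff)
    qed
    moreover have "(2::int) ^ n dvd oo * B n - oo * (4 * b' n)"
    proof -
      have "(2::int) ^ n dvd 4 * b' n - B n" using b1[of n] by simp
      then have "(2::int) ^ n dvd oo * (4 * b' n - B n)" by (rule dvd_mult)
      moreover have "oo * B n - oo * (4 * b' n) = - (oo * (4 * b' n - B n))" by (simp add: algebra_simps)
      ultimately show ?thesis by (simp only: dvd_minus_iff)
    qed
    ultimately show ?thesis unfolding cg_def dv_def by (simp only: ev_diff e1 e2 fst_conv snd_conv)
  qed
  have Xcomp: "cgn P n (X (Suc n)) (X n)" for n
  proof -
    have "(2::int) ^ n dvd (oo * b' (Suc n) + fst P * a' (Suc n)) - (oo * b' n + fst P * a' n)"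
    proof -
      have "(oo * b' (Suc n) + fst P * a' (Suc n)) - (oo * b' n + fst P * a' n) = oo * (b' (Suc n) - b' n) + fst P * (a' (Suc n) - a' n)"
        by (simp add: algebra_simps)
      then show ?thesis using a2[of n] b2[of n] by (simp add: dvd_add)
    qed
    moreover have "(2::int) ^ n dvd - a' (Suc n) - - a' n"
    proof -
      have "- a' (Suc n) - - a' n = - (a' (Suc n) - a' n)" by simp
      then show ?thesis using a2[of n] by (simp only: dvd_minus_iff)
    qed
    ultimately show ?thesis by (simp add: X_def cg_def dv_def)
  qed
  define K where "K n = of_int oo * c n h * yh h ^ ?d" for n
  define \<Phi> where "\<Phi> n z = X n + K n * gH m z" for n z
  have dif_eq: "\<Phi> n z - \<Phi> n z' = (z - z') * (K n * gD m z z')" for n z z'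
  proof -
    have "\<Phi> n z - \<Phi> n z' = K n * (gH m z - gH m z')" by (simp add: \<Phi>_def algebra_simps)
    then show ?thesis by (simp add: gH_diff algebra_simps)
  qed
  have dif: "\<exists>U. odq P U \<and> \<Phi> n z - \<Phi> n z' = (z - z') * U" if "n \<ge> 1" for n z z'
  proof (intro exI conjI)
    show "\<Phi> n z - \<Phi> n z' = (z - z') * (K n * gD m z z')" by (rule dif_eq)
    show "odq P (K n * gD m z z')" unfolding K_def
      by (intro odq_mult[OF eP] odq_of_int odq_pow odq_gD codd yodd that oo(2) m eP)
  qed
  have resp: "cgn P n (\<Phi> n z) (\<Phi> n z')" if "cgn P n z z'" for n z z'
  proof -
    have "dv P (2 ^ n) ((z - z') * (K n * gD m z z'))" using that by (simp add: cg_def isid_mult[OF iJ])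
    then show ?thesis by (simp add: cg_def dif_eq)
  qed
  have comp: "cgn P n (\<Phi> (Suc n) z) (\<Phi> n z)" for n z
    unfolding \<Phi>_def K_def
    by (intro cg_add[OF iJ] Xcomp cg_mult[OF iJ] ccomp) (simp_all add: iJ)
  obtain z where zO: "z \<in> O_carrier" and zs: "\<And>n. cgn P n (\<Phi> n (L n z)) 0"
    using solve[of P \<Phi>, OF eP resp comp dif] by blast
  show ?thesis
  proof (rule bexI[OF _ zO], rule allI)
    fix n
    define \<zeta> where "\<zeta> = L n z"
    define F where "F = (\<Sum>k<5. c n k * (if k = h then yh h * (1 + 2 * qpi * \<zeta>) else yh k) ^ ?d)"
    have "F = (\<Sum>k<5. c n k * yh k ^ ?d + (if k = h then c n h * yh h ^ ?d * ((1 + 2 * qpi * \<zeta>) ^ ?d - 1) else 0))"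
    proof -
      have pe: "(yh h * (1 + 2 * qpi * \<zeta>)) ^ ?d = yh h ^ ?d * (1 + 2 * qpi * \<zeta>) ^ ?d" by (rule power_mult_distrib)
      have "c n k * (if k = h then yh h * (1 + 2 * qpi * \<zeta>) else yh k) ^ ?d = c n k * yh k ^ ?d + (if k = h then c n h * yh h ^ ?d * ((1 + 2 * qpi * \<zeta>) ^ ?d - 1) else 0)" for k
      proof (cases "k = h")
        case True
        have "c n k * (if k = h then yh h * (1 + 2 * qpi * \<zeta>) else yh k) ^ ?d = c n h * (yh h ^ ?d * (1 + 2 * qpi * \<zeta>) ^ ?d)"
          using True pe by simp
        also have "\<dots> = c n h * yh h ^ ?d + c n h * yh h ^ ?d * ((1 + 2 * qpi * \<zeta>) ^ ?d - 1)"
          by (simp add: algebra_simps)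
        finally show ?thesis using True by simp
      qed simp
      then show ?thesis unfolding F_def by simp
    qed
    also have "\<dots> = T n + c n h * yh h ^ ?d * ((1 + 2 * qpi * \<zeta>) ^ ?d - 1)"
      using h by (simp add: sum.distrib T_def)
    also have "(1 + 2 * qpi * \<zeta>) ^ ?d - 1 = 4 * qpi * gH m \<zeta>"
      using gH_id[OF m1, of \<zeta>] by (simp add: algebra_simps)
    finally have Fe: "F = T n + c n h * yh h ^ ?d * (4 * qpi * gH m \<zeta>)" .
    have "of_int oo * F = of_int oo * T n + 4 * qpi * (K n * gH m \<zeta>)"
      unfolding Fe K_def by (simp add: algebra_simps)
    moreover have "cgn P n (of_int oo * T n + 4 * qpi * (K n * gH m \<zeta>)) (4 * qpi * X n + 4 * qpi * (K n * gH m \<zeta>))"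
      by (intro cg_add[OF iJ] claim1) (simp add: iJ)
    moreover have "4 * qpi * X n + 4 * qpi * (K n * gH m \<zeta>) = 4 * qpi * \<Phi> n \<zeta>"
      by (simp add: \<Phi>_def algebra_simps)
    moreover have "cgn P n (4 * qpi * \<Phi> n \<zeta>) 0"
      using cg_0_mult[OF iJ zs[of n], of "4 * qpi"] by (simp add: \<zeta>_def)
    ultimately have "cgn P n (F * of_int oo) 0"
      by (metis cg_trans[OF iJ] mult.commute)
    then have "cgn P n F 0" by (rule odq_cancel[OF eP odq_of_int[OF oo(2)]])
    then show "cgn P n (\<Sum>k<5. c n k * (if k = h then yh h * (1 + 2 * qpi * L n z) else yh k) ^ ?d) 0"
      unfolding F_def \<zeta>_def .
  qed
qed


definition redI :: "int \<times> int \<Rightarrow> int \<times> int" where "redI r = (fst r mod 8, snd r mod 4)"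
definition sP :: "int \<times> int \<Rightarrow> int \<times> int" where "sP P = pmul P (1, 1) (1, 1)"
definition okI :: "int \<Rightarrow> int \<Rightarrow> bool" where "okI a b \<longleftrightarrow> a mod 8 = 0 \<and> b mod 4 = 0"
definition sel :: "nat \<Rightarrow> int \<times> int \<Rightarrow> int \<times> int \<Rightarrow> int \<times> int" where
  "sel e r q = (if e = 0 then (0, 0) else if e = 1 then r else q)"
definition pats :: "(nat \<times> nat \<times> nat \<times> nat \<times> nat) list" where
  "pats = [(0,0,1,2,0), (1,2,0,0,0), (2,1,1,2,0), (1,2,0,0,1), (1,1,0,0,2), (2,1,1,2,2), (0,0,1,2,2), (1,1,2,1,2), (0,0,1,1,2), (1,2,1,1,2), (2,2,2,2,2), (1,1,2,2,0), (1,2,1,1,0), (2,2,1,2,0), (0,0,1,2,1), (2,1,1,2,1)]"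

fun tryp :: "(nat \<times> nat \<times> nat \<times> nat \<times> nat) list \<Rightarrow> int \<times> int \<Rightarrow> int \<times> int \<Rightarrow> int \<times> int \<Rightarrow> int \<times> int \<Rightarrow> int \<times> int
    \<Rightarrow> int \<times> int \<Rightarrow> int \<times> int \<Rightarrow> int \<times> int \<Rightarrow> int \<times> int \<Rightarrow> int \<times> int \<Rightarrow> bool" where
  "tryp [] r0 r1 r2 r3 r4 q0 q1 q2 q3 q4 = False"
| "tryp ((e0, e1, e2, e3, e4) # ps) r0 r1 r2 r3 r4 q0 q1 q2 q3 q4 =
    (if okI (fst (sel e0 r0 q0) + fst (sel e1 r1 q1) + fst (sel e2 r2 q2) + fst (sel e3 r3 q3) + fst (sel e4 r4 q4))
            (snd (sel e0 r0 q0) + snd (sel e1 r1 q1) + snd (sel e2 r2 q2) + snd (sel e3 r3 q3) + snd (sel e4 r4 q4))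
     then True else tryp ps r0 r1 r2 r3 r4 q0 q1 q2 q3 q4)"

definition chk :: "int \<times> int \<Rightarrow> int \<times> int \<Rightarrow> int \<times> int \<Rightarrow> int \<times> int \<Rightarrow> int \<times> int \<Rightarrow> int \<times> int \<Rightarrow> bool" where
  "chk P r0 r1 r2 r3 r4 = tryp pats r0 r1 r2 r3 r4 (pmul P r0 (sP P)) (pmul P r1 (sP P)) (pmul P r2 (sP P)) (pmul P r3 (sP P)) (pmul P r4 (sP P))"

definition lexle :: "int \<times> int \<Rightarrow> int \<times> int \<Rightarrow> bool" where
  "lexle a b \<longleftrightarrow> fst a < fst b \<or> (fst a = fst b \<and> snd a \<le> snd b)"
definition CL :: "int \<times> int \<Rightarrow> (int \<times> int) list \<Rightarrow> (int \<times> int) list" where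
  "CL P xs = filter (\<lambda>r. lexle r (redI (pmul P r (sP P)))) xs"

definition U16 :: "(int \<times> int) list" where "U16 = [(a, b). a <- [1, 3, 5, 7], b <- [0, 1, 2, 3]]"
definition D1 :: "(int \<times> int) list" where "D1 = [(a, b). a <- [1, 3, 5, 7], b <- [0, 2]]"
definition D3 :: "int \<Rightarrow> (int \<times> int) list" where "D3 p = filter (\<lambda>x. snd x mod 2 = p) U16"
definition T5 :: "(int \<times> int) list" where "T5 = [(0, 2), (2, 0), (2, 2), (4, 0), (4, 2), (6, 0), (6, 2)]"

fun ppow :: "int \<times> int \<Rightarrow> int \<times> int \<Rightarrow> nat \<Rightarrow> int \<times> int" where
  "ppow P x 0 = (1, 0)"
| "ppow P x (Suc k) = pmul P x (ppow P x k)"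

definition FINP :: "int \<times> int \<Rightarrow> bool" where
  "FINP P = list_all (\<lambda>r1. list_all (\<lambda>r2. list_all (\<lambda>r3. list_all (\<lambda>t. chk P (1, 0) r1 r2 r3 t)
      (CL P T5)) (CL P (D3 (snd r2 mod 2)))) (CL P U16)) (CL P D1)"

definition COVP :: "int \<times> int \<Rightarrow> bool" where
  "COVP P \<longleftrightarrow>
    list_all (\<lambda>r. r \<in> set (CL P U16) \<or> redI (pmul P r (sP P)) \<in> set (CL P U16)) U16 \<and>
    list_all (\<lambda>r. r \<in> set (CL P D1) \<or> redI (pmul P r (sP P)) \<in> set (CL P D1)) D1 \<and>
    list_all (\<lambda>r. r \<in> set (CL P T5) \<or> redI (pmul P r (sP P)) \<in> set (CL P T5)) T5 \<and>
    list_all (\<lambda>r. r \<in> set (CL P (D3 0)) \<or> redI (pmul P r (sP P)) \<in> set (CL P (D3 0))) (D3 0) \<and>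
    list_all (\<lambda>r. r \<in> set (CL P (D3 1)) \<or> redI (pmul P r (sP P)) \<in> set (CL P (D3 1))) (D3 1) \<and>
    list_all (\<lambda>r. snd (redI (pmul P r (sP P))) mod 2 = snd r mod 2) U16 \<and>
    list_all (\<lambda>v. list_all (\<lambda>j. redI (pmul P (ppow P (0, 1) j) v) \<in> set T5) [2, 3, 4]) U16 \<and>
    redI (pmul P (sP P) (sP P)) = (1, 0)"

lemma FIN1: "FINP (0, -2)" by code_simp
lemma FIN2: "FINP (0, 2)" by code_simp
lemma FIN3: "FINP (0, -10)" by code_simp
lemma FIN4: "FINP (0, 10)" by code_simp
lemma FIN5: "FINP (2, 2)" by code_simp
lemma FIN6: "FINP (2, 6)" by code_simp

lemma COV: "list_all COVP [(0, -2), (0, 2), (0, -10), (0, 10), (2, 2), (2, 6)]" by code_simp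

lemma pats_ok: "list_all (\<lambda>(e0, e1, e2, e3, e4). e0 \<le> 2 \<and> e1 \<le> 2 \<and> e2 \<le> 2 \<and> e3 \<le> 2 \<and> e4 \<le> 2 \<and> (e0 \<noteq> 0 \<or> e1 \<noteq> 0 \<or> e2 \<noteq> 0 \<or> e3 \<noteq> 0)) pats"
  by code_simp


definition SS :: qq where "SS = (1 + qpi) ^ 2"
definition Eq :: "nat \<Rightarrow> qq" where "Eq e = (if e = 0 then 0 else if e = 1 then 1 else SS)"

lemma ev_SS[simp]: "ev P SS = sP P"
  by (simp add: SS_def sP_def power2_eq_square qpi_def pmul_def)

definition Solv :: "int \<times> int \<Rightarrow> (nat \<Rightarrow> qq) \<Rightarrow> bool" where
  "Solv P x \<longleftrightarrow> (\<exists>e. (\<forall>k<5. e k \<le> 2) \<and> (\<exists>k<4. e k \<noteq> 0) \<and> dI P (\<Sum>k<5. x k * Eq (e k)))"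

lemma sum5: "(\<Sum>k<(5::nat). f k) = f 0 + f 1 + f 2 + f 3 + (f 4 :: 'a :: comm_monoid_add)"
  by (simp add: eval_nat_numeral ac_simps)

lemma tryp_sound: "tryp ps r0 r1 r2 r3 r4 q0 q1 q2 q3 q4 \<Longrightarrow>
   \<exists>e0 e1 e2 e3 e4. (e0, e1, e2, e3, e4) \<in> set ps \<and>
     okI (fst (sel e0 r0 q0) + fst (sel e1 r1 q1) + fst (sel e2 r2 q2) + fst (sel e3 r3 q3) + fst (sel e4 r4 q4))
         (snd (sel e0 r0 q0) + snd (sel e1 r1 q1) + snd (sel e2 r2 q2) + snd (sel e3 r3 q3) + snd (sel e4 r4 q4))"
proof (induction ps)
  case Nil then show ?case by simp
next
  case (Cons p ps)
  obtain e0 e1 e2 e3 e4 where p: "p = (e0, e1, e2, e3, e4)" by (cases p) auto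
  show ?case
  proof (cases "okI (fst (sel e0 r0 q0) + fst (sel e1 r1 q1) + fst (sel e2 r2 q2) + fst (sel e3 r3 q3) + fst (sel e4 r4 q4))
            (snd (sel e0 r0 q0) + snd (sel e1 r1 q1) + snd (sel e2 r2 q2) + snd (sel e3 r3 q3) + snd (sel e4 r4 q4))")
    case True then show ?thesis using p
      by (intro exI[of _ e0] exI[of _ e1] exI[of _ e2] exI[of _ e3] exI[of _ e4]) simp
  next
    case False
    then have "tryp ps r0 r1 r2 r3 r4 q0 q1 q2 q3 q4" using Cons.prems p by simp
    then obtain f0 f1 f2 f3 f4 where "(f0, f1, f2, f3, f4) \<in> set ps" and
      "okI (fst (sel f0 r0 q0) + fst (sel f1 r1 q1) + fst (sel f2 r2 q2) + fst (sel f3 r3 q3) + fst (sel f4 r4 q4))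
            (snd (sel f0 r0 q0) + snd (sel f1 r1 q1) + snd (sel f2 r2 q2) + snd (sel f3 r3 q3) + snd (sel f4 r4 q4))"
      using Cons.IH by blast
    then show ?thesis
      by (intro exI[of _ f0] exI[of _ f1] exI[of _ f2] exI[of _ f3] exI[of _ f4]) simp
  qed
qed

lemma ev_qp_Eq: "e \<le> 2 \<Longrightarrow> ev P (qp r * Eq e) = sel e r (pmul P r (sP P))"
  by (auto simp: Eq_def sel_def pmul_def qp_def)

lemma chk_sound:
  assumes "chk P r0 r1 r2 r3 r4"
  shows "Solv P (\<lambda>k. qp ([r0, r1, r2, r3, r4] ! k))"
proof -
  obtain e0 e1 e2 e3 e4 where mem: "(e0, e1, e2, e3, e4) \<in> set pats" and
    ok: "okI (fst (sel e0 r0 (pmul P r0 (sP P))) + fst (sel e1 r1 (pmul P r1 (sP P))) + fst (sel e2 r2 (pmul P r2 (sP P))) + fst (sel e3 r3 (pmul P r3 (sP P))) + fst (sel e4 r4 (pmul P r4 (sP P))))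
         (snd (sel e0 r0 (pmul P r0 (sP P))) + snd (sel e1 r1 (pmul P r1 (sP P))) + snd (sel e2 r2 (pmul P r2 (sP P))) + snd (sel e3 r3 (pmul P r3 (sP P))) + snd (sel e4 r4 (pmul P r4 (sP P))))"
    using tryp_sound[OF assms[unfolded chk_def]] by blast
  have v: "e0 \<le> 2 \<and> e1 \<le> 2 \<and> e2 \<le> 2 \<and> e3 \<le> 2 \<and> e4 \<le> 2 \<and> (e0 \<noteq> 0 \<or> e1 \<noteq> 0 \<or> e2 \<noteq> 0 \<or> e3 \<noteq> 0)"
    using pats_ok mem by (auto simp: list_all_iff)
  define e where "e k = [e0, e1, e2, e3, e4] ! k" for k
  show ?thesis unfolding Solv_def
  proof (intro exI[of _ e] conjI)
    show "\<forall>k<5. e k \<le> 2" using v by (auto simp: e_def less_Suc_eq numeral_eq_Suc)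
    have "e 0 = e0" "e 1 = e1" "e 2 = e2" "e 3 = e3" by (simp_all add: e_def numeral_eq_Suc)
    then show "\<exists>k<4. e k \<noteq> 0" using v
      by (metis zero_less_numeral one_less_numeral_iff numeral_less_iff semiring_norm(76) semiring_norm(78) semiring_norm(79) semiring_norm(81) less_numeral_extra(1))
    show "dI P (\<Sum>k<5. qp ([r0, r1, r2, r3, r4] ! k) * Eq (e k))"
      using ok v unfolding sum5 dI_def okI_def
      by (simp add: e_def ev_qp_Eq del: ev_mult) (simp add: mod_eq_0_iff_dvd)
  qed
qed

lemma cg_0_iff: "cg J x 0 \<longleftrightarrow> J x" by (simp add: cg_def)

lemma ev_eq_cgI: "ev P x = ev P y \<Longrightarrow> cg (dI P) x y"
  by (simp add: cg_def dI_def)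

lemma redI_cg: "cg (dI P) (qp (redI r)) (qp r)"
proof -
  have "8 dvd fst r mod 8 - fst r" "4 dvd snd r mod 4 - snd r"
    by (simp_all add: mod_eq_dvd_iff[symmetric])
  then show ?thesis by (simp add: cg_def dI_def redI_def qp_def)
qed

lemma Solv_cong:
  assumes iI: "isid (dI P)" and c: "\<And>k. k < 5 \<Longrightarrow> cg (dI P) (x k) (y k)" and S: "Solv P y"
  shows "Solv P x"
proof -
  obtain e where e: "\<forall>k<5. e k \<le> 2" "\<exists>k<4. e k \<noteq> 0" "dI P (\<Sum>k<5. y k * Eq (e k))"
    using S unfolding Solv_def by blast
  have "cg (dI P) (\<Sum>k<5. x k * Eq (e k)) (\<Sum>k<5. y k * Eq (e k))"
    by (rule cg_sum[OF iI]) (auto intro!: cg_mult[OF iI] c simp: iI)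
  then have "dI P (\<Sum>k<5. x k * Eq (e k))" using e(3) cg_trans[OF iI] by (metis cg_0_iff)
  then show ?thesis unfolding Solv_def using e(1,2) by blast
qed

definition sw :: "nat \<Rightarrow> nat" where "sw e = (if e = 0 then 0 else if e = 1 then 2 else 1)"

lemma Solv_flags:
  assumes iI: "isid (dI P)" and SS1: "cg (dI P) (SS * SS) 1"
    and S: "Solv P (\<lambda>k. x k * (if f k then SS else 1))"
  shows "Solv P x"
proof -
  obtain e where e: "\<forall>k<5. e k \<le> 2" "\<exists>k<4. e k \<noteq> 0" "dI P (\<Sum>k<5. x k * (if f k then SS else 1) * Eq (e k))"
    using S unfolding Solv_def by blast
  define e' where "e' k = (if f k then sw (e k) else e k)" for k
  have t: "cg (dI P) (x k * Eq (e' k)) (x k * (if f k then SS else 1) * Eq (e k))" if "k < 5" for k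
  proof (cases "f k")
    case True
    have "e k \<le> 2" using e(1) that by blast
    then consider "e k = 0" | "e k = 1" | "e k = 2" by linarith
    then show ?thesis
    proof cases
      case 3
      have "cg (dI P) (x k * 1) (x k * (SS * SS))" by (rule cg_multL[OF iI cg_sym[OF iI SS1]])
      then show ?thesis using True 3 by (simp add: e'_def sw_def Eq_def mult.assoc)
    qed (simp_all add: e'_def sw_def Eq_def True iI)
  qed (simp add: e'_def iI)
  have "cg (dI P) (\<Sum>k<5. x k * Eq (e' k)) (\<Sum>k<5. x k * (if f k then SS else 1) * Eq (e k))"
    by (rule cg_sum[OF iI]) (simp add: t)
  then have "dI P (\<Sum>k<5. x k * Eq (e' k))" using e(3) cg_trans[OF iI] by (metis cg_0_iff)
  moreover have "\<forall>k<5. e' k \<le> 2" using e(1) by (simp add: e'_def sw_def)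
  moreover have "\<exists>k<4. e' k \<noteq> 0" using e(2) by (auto simp: e'_def sw_def)
  ultimately show ?thesis unfolding Solv_def by blast
qed

lemma Solv_scale:
  assumes iI: "isid (dI P)" and w: "cg (dI P) (w' * w) 1" and S: "Solv P (\<lambda>k. w * x k)"
  shows "Solv P x"
proof -
  obtain e where e: "\<forall>k<5. e k \<le> 2" "\<exists>k<4. e k \<noteq> 0" "dI P (\<Sum>k<5. w * x k * Eq (e k))"
    using S unfolding Solv_def by blast
  let ?S = "\<Sum>k<5. x k * Eq (e k)"
  have "(\<Sum>k<5. w * x k * Eq (e k)) = w * ?S" by (simp add: sum_distrib_left mult.assoc)
  then have "dI P (w' * (w * ?S))" using e(3) isid_mult2[OF iI] by metis
  moreover have "cg (dI P) (w' * (w * ?S)) (1 * ?S)"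
    unfolding mult.assoc[symmetric] by (rule cg_mult[OF iI w]) (simp add: iI)
  ultimately have "dI P ?S" using cg_trans[OF iI] cg_sym[OF iI] by (metis cg_0_iff mult_1_left)
  then show ?thesis unfolding Solv_def using e(1,2) by blast
qed

lemma canon:
  assumes cov: "list_all (\<lambda>r. r \<in> set (CL P LL) \<or> redI (pmul P r (sP P)) \<in> set (CL P LL)) LL"
    and r: "r \<in> set LL"
  shows "\<exists>r' \<in> set (CL P LL). \<exists>f. (r' = r \<or> r' = redI (pmul P r (sP P))) \<and> cg (dI P) (qp r') (qp r * (if f then SS else 1))"
proof -
  have "r \<in> set (CL P LL) \<or> redI (pmul P r (sP P)) \<in> set (CL P LL)" using cov r by (simp add: list_all_iff)
  then show ?thesis
  proof
    assume "r \<in> set (CL P LL)"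
    then show ?thesis by (intro bexI[of _ r] exI[of _ False]) (simp_all add: cg_def dI_def)
  next
    assume h: "redI (pmul P r (sP P)) \<in> set (CL P LL)"
    have "cg (dI P) (qp (redI (pmul P r (sP P)))) (qp r * SS)"
      using redI_cg[of P "pmul P r (sP P)"] by (simp add: cg_def dI_def)
    then show ?thesis using h by (intro bexI[of _ "redI (pmul P r (sP P))"] exI[of _ True]) simp_all
  qed
qed

lemma params_facts: assumes "P \<in> ramified_params"
  shows "FINP P" "COVP P" "evP P" "\<exists>oo. snd P = 2 * oo \<and> odd oo"
proof -
  have "P = (0, -2) \<or> P = (0, 2) \<or> P = (0, -10) \<or> P = (0, 10) \<or> P = (2, 2) \<or> P = (2, 6)"
    using assms by (simp add: ramified_params_def)
  then show "FINP P" "COVP P" "evP P" "\<exists>oo. snd P = 2 * oo \<and> odd oo"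
    using FIN1 FIN2 FIN3 FIN4 FIN5 FIN6 COV by (auto simp: evP_def)
qed

lemma residue_solv:
  assumes K: "P \<in> ramified_params"
    and x0: "cg (dI P) (x 0) 1"
    and r1: "redI (ev P (x 1)) \<in> set D1"
    and r2: "redI (ev P (x 2)) \<in> set U16"
    and r3: "redI (ev P (x 3)) \<in> set (D3 (snd (redI (ev P (x 2))) mod 2))"
    and r4: "redI (ev P (x 4)) \<in> set T5"
  shows "Solv P x"
proof -
  have F: "FINP P" and C: "COVP P" and eP: "evP P" using params_facts[OF K] by auto
  have iI: "isid (dI P)" using eP by (intro isid_dI) (simp add: evP_def)
  have SS1: "cg (dI P) (SS * SS) 1"
  proof -
    have "redI (pmul P (sP P) (sP P)) = (1, 0)" using C by (simp add: COVP_def)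
    then have "8 dvd fst (pmul P (sP P) (sP P)) - 1" "4 dvd snd (pmul P (sP P) (sP P))"
      by (auto simp: redI_def mod_eq_dvd_iff[symmetric] mod_eq_0_iff_dvd prod_eq_iff)
    moreover have e: "ev P (SS * SS) = pmul P (sP P) (sP P)" by (simp only: ev_mult ev_SS)
    ultimately show ?thesis unfolding cg_def dI_def by (simp only: ev_diff e ev_one fst_conv snd_conv) simp
  qed
  define \<rho> where "\<rho> k = redI (ev P (x k))" for k
  have xr: "cg (dI P) (qp (\<rho> k)) (x k)" for k
  proof -
    have "cg (dI P) (qp (\<rho> k)) (qp (ev P (x k)))" unfolding \<rho>_def by (rule redI_cg)
    moreover have "cg (dI P) (qp (ev P (x k))) (x k)" by (rule ev_eq_cgI) simp
    ultimately show ?thesis by (rule cg_trans[OF iI])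
  qed
  have covs: "list_all (\<lambda>r. r \<in> set (CL P U16) \<or> redI (pmul P r (sP P)) \<in> set (CL P U16)) U16"
    "list_all (\<lambda>r. r \<in> set (CL P D1) \<or> redI (pmul P r (sP P)) \<in> set (CL P D1)) D1"
    "list_all (\<lambda>r. r \<in> set (CL P T5) \<or> redI (pmul P r (sP P)) \<in> set (CL P T5)) T5"
    "list_all (\<lambda>r. r \<in> set (CL P (D3 0)) \<or> redI (pmul P r (sP P)) \<in> set (CL P (D3 0))) (D3 0)"
    "list_all (\<lambda>r. r \<in> set (CL P (D3 1)) \<or> redI (pmul P r (sP P)) \<in> set (CL P (D3 1))) (D3 1)"
    "list_all (\<lambda>r. snd (redI (pmul P r (sP P))) mod 2 = snd r mod 2) U16"
    using C by (simp_all add: COVP_def)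
  obtain r1' f1 where r1': "r1' \<in> set (CL P D1)" "cg (dI P) (qp r1') (qp (\<rho> 1) * (if f1 then SS else 1))"
    using canon[OF covs(2) r1[folded \<rho>_def]] by blast
  obtain r2' f2 where r2': "r2' \<in> set (CL P U16)" "r2' = \<rho> 2 \<or> r2' = redI (pmul P (\<rho> 2) (sP P))"
      "cg (dI P) (qp r2') (qp (\<rho> 2) * (if f2 then SS else 1))"
    using canon[OF covs(1) r2[folded \<rho>_def]] by blast
  have par: "snd r2' mod 2 = snd (\<rho> 2) mod 2"
    using r2'(2) covs(6) r2[folded \<rho>_def] by (auto simp: list_all_iff)
  obtain r4' f4 where r4': "r4' \<in> set (CL P T5)" "cg (dI P) (qp r4') (qp (\<rho> 4) * (if f4 then SS else 1))"
    using canon[OF covs(3) r4[folded \<rho>_def]] by blast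
  have p01: "snd (\<rho> 2) mod 2 = 0 \<or> snd (\<rho> 2) mod 2 = 1" by auto
  obtain r3' f3 where r3': "r3' \<in> set (CL P (D3 (snd r2' mod 2)))" "cg (dI P) (qp r3') (qp (\<rho> 3) * (if f3 then SS else 1))"
  proof -
    from p01 show ?thesis
    proof
      assume h: "snd (\<rho> 2) mod 2 = 0"
      have "\<rho> 3 \<in> set (D3 0)" using r3[folded \<rho>_def] h by simp
      from canon[OF covs(4) this] obtain r' f where "r' \<in> set (CL P (D3 0))" "cg (dI P) (qp r') (qp (\<rho> 3) * (if f then SS else 1))"
        by blast
      moreover have "D3 (snd r2' mod 2) = D3 0" using h par by simp
      ultimately show ?thesis using that by metis
    next
      assume h: "snd (\<rho> 2) mod 2 = 1"
      have "\<rho> 3 \<in> set (D3 1)" using r3[folded \<rho>_def] h by simp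
      from canon[OF covs(5) this] obtain r' f where "r' \<in> set (CL P (D3 1))" "cg (dI P) (qp r') (qp (\<rho> 3) * (if f then SS else 1))"
        by blast
      moreover have "D3 (snd r2' mod 2) = D3 1" using h par by simp
      ultimately show ?thesis using that by metis
    qed
  qed
  have "chk P (1, 0) r1' r2' r3' r4'"
    using F r1' r2' r3' r4' by (simp add: FINP_def list_all_iff)
  then have S0: "Solv P (\<lambda>k. qp ([(1, 0), r1', r2', r3', r4'] ! k))" by (rule chk_sound)
  define f where "f k = (if k = 1 then f1 else if k = 2 then f2 else if k = 3 then f3 else if k = 4 then f4 else False)" for k :: nat
  have "cg (dI P) (x k * (if f k then SS else 1)) (qp ([(1, 0), r1', r2', r3', r4'] ! k))" if "k < 5" for k
  proof -
    have k5: "k = 0 \<or> k = 1 \<or> k = 2 \<or> k = 3 \<or> k = 4" using that by auto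
    have m: "cg (dI P) (qp (\<rho> k) * (if f k then SS else 1)) (x k * (if f k then SS else 1))"
      by (rule cg_mult[OF iI xr]) (simp add: iI)
    have "cg (dI P) (qp ([(1, 0), r1', r2', r3', r4'] ! k)) (qp (\<rho> k) * (if f k then SS else 1))"
    proof -
      { assume k0: "k = 0"
        have "cg (dI P) (qp (\<rho> 0)) 1" using xr[of 0] x0 by (rule cg_trans[OF iI])
        then have "cg (dI P) 1 (qp (\<rho> 0))" by (rule cg_sym[OF iI])
        moreover have "qp ([(1, 0), r1', r2', r3', r4'] ! 0) = 1" by (simp add: qp_def)
        ultimately have ?thesis using k0 by (simp add: f_def) }
      moreover { assume "k = 1" then have ?thesis using r1' by (simp add: f_def) }
      moreover { assume "k = 2" then have ?thesis using r2' by (simp add: f_def) }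
      moreover { assume "k = 3" then have ?thesis using r3' by (simp add: f_def numeral_eq_Suc) }
      moreover { assume "k = 4" then have ?thesis using r4' by (simp add: f_def numeral_eq_Suc) }
      ultimately show ?thesis using k5 by blast
    qed
    then show ?thesis using m cg_trans[OF iI] cg_sym[OF iI] by blast
  qed
  then have "Solv P (\<lambda>k. x k * (if f k then SS else 1))" by (rule Solv_cong[OF iI _ S0])
  then show ?thesis by (rule Solv_flags[OF iI SS1])
qed


definition Yq :: "nat \<Rightarrow> qq" where "Yq e = (if e = 0 then 0 else if e = 1 then 1 else 1 + qpi)"

lemma Yq_pow: assumes iI: "isid (dI P)" and SS1: "cg (dI P) (SS * SS) 1" and m: "odd m" and e: "e \<le> 2"
  shows "cg (dI P) (Yq e ^ (2 * m)) (Eq e)"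
proof -
  have m0: "m \<noteq> 0" using m odd_pos by auto
  consider "e = 0" | "e = 1" | "e = 2" using e by linarith
  then show ?thesis
  proof cases
    case 1
    have "(0::qq) ^ (2 * m) = 0" using m0 by (simp add: power_0_left)
    then show ?thesis using 1 by (simp add: Yq_def Eq_def iI)
  next
    case 2 then show ?thesis by (simp add: Yq_def Eq_def iI)
  next
    case 3
    obtain t where t: "m = 2 * t + 1" using m by (metis oddE)
    have ex: "2 * m = 2 + 4 * t" using t by simp
    have a: "(1 + qpi) ^ (2 * m) = (1 + qpi) ^ 2 * ((1 + qpi) ^ 4) ^ t"
      by (simp only: ex power_add power_mult)
    have b: "SS * SS = (1 + qpi) ^ 4" unfolding SS_def by (simp flip: power_add)
    have "Yq e ^ (2 * m) = SS * (SS * SS) ^ t"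
      using 3 a b by (simp add: Yq_def SS_def)
    moreover have "cg (dI P) (SS * (SS * SS) ^ t) (SS * 1 ^ t)"
      by (rule cg_mult[OF iI]) (simp_all add: iI cg_power[OF iI SS1, of t, simplified])
    ultimately show ?thesis using 3 by (simp add: Eq_def)
  qed
qed

lemma Solv_to_yh:
  assumes iI: "isid (dI P)" and SS1: "cg (dI P) (SS * SS) 1" and m: "odd m" and S: "Solv P x"
  shows "\<exists>e. (\<forall>k<5. e k \<le> 2) \<and> (\<exists>h<4. e h \<noteq> 0) \<and> dI P (\<Sum>k<5. x k * Yq (e k) ^ (2 * m))"
proof -
  obtain e where e: "\<forall>k<5. e k \<le> 2" "\<exists>k<4. e k \<noteq> 0" "dI P (\<Sum>k<5. x k * Eq (e k))"
    using S unfolding Solv_def by blast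
  have "cg (dI P) (\<Sum>k<5. x k * Yq (e k) ^ (2 * m)) (\<Sum>k<5. x k * Eq (e k))"
    by (rule cg_sum[OF iI]) (auto intro!: cg_mult[OF iI] Yq_pow[OF iI SS1 m] simp: iI e(1))
  then have "dI P (\<Sum>k<5. x k * Yq (e k) ^ (2 * m))" using e(3) cg_trans[OF iI] by (metis cg_0_iff)
  then show ?thesis using e(1,2) by blast
qed

lemma odq_Yq: "e \<noteq> 0 \<Longrightarrow> odq P (Yq e)"
  by (simp add: Yq_def odq_def qpi_def)

lemma SS1_of: "P \<in> ramified_params \<Longrightarrow> cg (dI P) (SS * SS) 1"
proof -
  assume K: "P \<in> ramified_params"
  have C: "COVP P" using params_facts[OF K] by auto
  have "redI (pmul P (sP P) (sP P)) = (1, 0)" using C by (simp add: COVP_def)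
  then have "8 dvd fst (pmul P (sP P) (sP P)) - 1" "4 dvd snd (pmul P (sP P) (sP P))"
    by (auto simp: redI_def mod_eq_dvd_iff[symmetric] mod_eq_0_iff_dvd prod_eq_iff)
  moreover have e: "ev P (SS * SS) = pmul P (sP P) (sP P)" by (simp only: ev_mult ev_SS)
  ultimately show ?thesis unfolding cg_def dI_def by (simp only: ev_diff e ev_one fst_conv snd_conv) simp
qed

lemma ev_inj: "(\<And>Q. ev Q x = ev Q y) \<Longrightarrow> x = y"
  unfolding ev_def by (metis Rep_qq_inject ext)

lemma unit_L: assumes "o_unit P u" shows "\<exists>v\<in>O_carrier. \<forall>n. cgn P n (L n u * L n v) 1"
proof -
  obtain v where v: "v \<in> O_carrier" "o_mul P u v = o_one" using assms by (auto simp: o_unit_def)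
  have "cgn P n (L n u * L n v) 1" for n
  proof -
    have "cgn P n (L n (o_mul P u v)) (L n u * L n v)" by (rule L_mul)
    then have "cgn P n (L n u * L n v) (L n o_one)" using v(2) cg_sym[OF isid_dv] by simp
    then show ?thesis using L_one cg_trans[OF isid_dv] by blast
  qed
  then show ?thesis using v(1) by blast
qed

lemma odq_of_unit_prod: assumes "evP P" "cgn P n (x * y) 1" "n \<ge> 1" shows "odq P x"
proof -
  have "(2::int) ^ n dvd fst (pmul P (ev P x) (ev P y)) - 1" using assms(2) by (simp add: cg_def dv_def)
  moreover have "(2::int) dvd 2 ^ n" using assms(3) by (simp add: dvd_power_iff_le)
  ultimately have "2 dvd fst (pmul P (ev P x) (ev P y)) - 1" by (rule dvd_trans[rotated])
  then have "odd (fst (pmul P (ev P x) (ev P y)))" by presburger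
  then show ?thesis using assms(1) by (auto simp: odq_def pmul_def evP_def)
qed

lemma unit_odq: assumes "evP P" "o_unit P u" "n \<ge> 1" shows "odq P (L n u)"
  using unit_L[OF assms(2)] odq_of_unit_prod[OF assms(1) _ assms(3)] by blast

lemma unit_O: "o_unit P u \<Longrightarrow> u \<in> O_carrier" by (simp add: o_unit_def)

lemma dv2_qpi2: "evP P \<Longrightarrow> dv P 2 (qpi ^ 2 * y)"
  by (auto simp: dv_def evP_def qpi_def pmul_def power2_eq_square)

lemma pi_coeff_mod2:
  assumes eP: "evP P" and pc: "pi_coeff P u c" and n: "n \<ge> 1"
  shows "cg (dv P 2) (L n u) (1 + of_nat c * qpi)"
proof -
  obtain W where W: "W \<in> O_carrier" and
    eq: "o_sub u (o_add o_one (o_mul P (z2_of_int (int c), z2_of_int 0) o_pi)) = o_mul P (o_pow P o_pi 2) W"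
    using pc unfolding pi_coeff_def o_dvd_def by blast
  have i: "isid (dv P (2 ^ n))" by (rule isid_dv)
  have l1: "cgn P n (L n (o_sub u (o_add o_one (o_mul P (z2_of_int (int c), z2_of_int 0) o_pi)))) (L n u - (1 + qc (int c) 0 * qpi))"
  proof -
    have a: "cgn P n (L n (o_mul P (z2_of_int (int c), z2_of_int 0) o_pi)) (qc (int c) 0 * qpi)"
      by (rule cg_trans[OF i L_mul cg_mult[OF i L_const L_pi]])
    have b: "cgn P n (L n (o_add o_one (o_mul P (z2_of_int (int c), z2_of_int 0) o_pi))) (1 + qc (int c) 0 * qpi)"
      by (rule cg_trans[OF i L_add cg_add[OF i L_one a]])
    show ?thesis by (rule cg_trans[OF i L_sub cg_diff[OF i cg_refl[OF i] b]])
  qed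
  have l2: "cgn P n (L n (o_mul P (o_pow P o_pi 2) W)) (qpi ^ 2 * L n W)"
    by (rule cg_trans[OF i L_mul cg_mult[OF i cg_trans[OF i L_pow cg_power[OF i L_pi]] cg_refl[OF i]]])
  have "cgn P n (L n u - (1 + qc (int c) 0 * qpi)) (qpi ^ 2 * L n W)"
    using cg_trans[OF i cg_sym[OF i l1] l2[folded eq]] .
  then have "dv P 2 (L n u - (1 + qc (int c) 0 * qpi) - qpi ^ 2 * L n W)"
    unfolding cg_def using n dv_mono_le[of 1 n P] by simp
  moreover have "dv P 2 (qpi ^ 2 * L n W)" by (rule dv2_qpi2[OF eP])
  ultimately have "dv P 2 ((L n u - (1 + qc (int c) 0 * qpi) - qpi ^ 2 * L n W) + qpi ^ 2 * L n W)"
    using isid_add[OF isid_dv[of P 2]] by blast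
  then have "dv P 2 (L n u - (1 + qc (int c) 0 * qpi))" by simp
  moreover have "qc (int c) 0 = of_nat c" by (rule ev_inj) simp
  ultimately show ?thesis by (simp add: cg_def)
qed


lemma ev_pow_cong: "ev P x = ev P y \<Longrightarrow> ev P (x ^ r) = ev P (y ^ r)"
  by (induction r) simp_all

lemma ev_of_int_pow: "ev P (of_int z ^ r) = (z ^ r, 0)"
  by (induction r) (simp_all add: pmul_def)

lemma pi_cancel:
  assumes eP: "evP P" and oo: "snd P = 2 * oo" "odd oo" and c: "cgn P (Suc r) (qpi ^ r * Y) 0"
  shows "even (fst (ev P Y))"
proof -
  define T where "T = of_int (fst P) - qpi"
  have e1: "ev P (qpi * T) = ev P (of_int (snd P))" by (simp add: T_def qpi_def pmul_def)
  have "cgn P (Suc r) (T ^ r * (qpi ^ r * Y)) 0" using cg_0_mult[OF isid_dv c] by simp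
  moreover have "ev P (T ^ r * (qpi ^ r * Y)) = ev P (of_int (snd P) ^ r * Y)"
  proof -
    have "T ^ r * (qpi ^ r * Y) = (qpi * T) ^ r * Y" by (simp add: power_mult_distrib algebra_simps)
    moreover have "ev P ((qpi * T) ^ r * Y) = pmul P (ev P ((qpi * T) ^ r)) (ev P Y)" by (rule ev_mult)
    moreover have "ev P (of_int (snd P) ^ r * Y) = pmul P (ev P (of_int (snd P) ^ r)) (ev P Y)" by (rule ev_mult)
    ultimately show ?thesis using ev_pow_cong[OF e1, of r] by simp
  qed
  ultimately have "(2::int) ^ Suc r dvd fst (ev P (of_int (snd P) ^ r * Y))" by (simp add: cg_def dv_def)
  moreover have "fst (ev P (of_int (snd P) ^ r * Y)) = 2 ^ r * (oo ^ r * fst (ev P Y))"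
    by (simp only: ev_mult ev_of_int_pow) (simp add: pmul_def oo(1) power_mult_distrib)
  ultimately have "(2::int) ^ r * 2 dvd 2 ^ r * (oo ^ r * fst (ev P Y))" by simp
  then have "2 dvd oo ^ r * fst (ev P Y)" by (simp add: mult.commute)
  then show ?thesis using oo(2) by simp
qed

lemma fst_qpi_mult_even: "evP P \<Longrightarrow> 1 \<le> k \<Longrightarrow> even (fst (ev P (qpi ^ k * y)))"
proof -
  assume "evP P" "1 \<le> k"
  then obtain k' where "k = Suc k'" by (cases k) auto
  then have "qpi ^ k * y = qpi * (qpi ^ k' * y)" by simp
  then show ?thesis using \<open>evP P\<close> by (simp add: evP_def qpi_def pmul_def)
qed

lemma parity_cg: "n \<ge> 1 \<Longrightarrow> cgn P n x y \<Longrightarrow> even (fst (ev P x)) = even (fst (ev P y))"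
proof -
  assume "n \<ge> 1" "cgn P n x y"
  then have "(2::int) ^ n dvd fst (ev P x) - fst (ev P y)" by (simp add: cg_def dv_def)
  moreover have "(2::int) dvd 2 ^ n" using \<open>n \<ge> 1\<close> by (simp add: dvd_power_iff_le)
  ultimately have "2 dvd fst (ev P x) - fst (ev P y)" by (rule dvd_trans[rotated])
  then show ?thesis by presburger
qed

lemma val_uniq:
  assumes eP: "evP P" and oo: "snd P = 2 * oo" "odd oo"
    and u: "o_unit P u" and u': "o_unit P u'"
    and eq: "o_mul P (o_pow P o_pi r) u = o_mul P (o_pow P o_pi r') u'"
  shows "r = r'"
proof -
  have main: False if "r < r'" and u: "o_unit P u" and u': "o_unit P u'"
    and eq: "o_mul P (o_pow P o_pi r) u = o_mul P (o_pow P o_pi r') u'" for r r' u u'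
  proof -
    define n where "n = Suc r"
    have i: "isid (dv P (2 ^ n))" by (rule isid_dv)
    have lv: "cgn P n (L n (o_mul P (o_pow P o_pi q) v)) (qpi ^ q * L n v)" for q v
      by (rule cg_trans[OF i L_mul cg_mult[OF i cg_trans[OF i L_pow cg_power[OF i L_pi]] cg_refl[OF i]]])
    have "cgn P n (qpi ^ r * L n u) (qpi ^ r' * L n u')"
      using cg_trans[OF i cg_sym[OF i lv[of r u]] lv[of r' u', folded eq]] .
    moreover have "qpi ^ r' * L n u' = qpi ^ r * (qpi ^ (r' - r) * L n u')"
    proof -
      have "r' = r + (r' - r)" using that(1) by simp
      then have "qpi ^ r' = qpi ^ r * qpi ^ (r' - r)" by (metis power_add)
      then show ?thesis by (simp add: mult.assoc)
    qed
    ultimately have "cgn P n (qpi ^ r * (L n u - qpi ^ (r' - r) * L n u')) 0"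
      by (simp add: cg_def algebra_simps)
    then have "even (fst (ev P (L n u - qpi ^ (r' - r) * L n u')))"
      using pi_cancel[OF eP oo] unfolding n_def by blast
    moreover have "even (fst (ev P (qpi ^ (r' - r) * L n u')))"
      by (rule fst_qpi_mult_even[OF eP]) (use that(1) in simp)
    ultimately have "even (fst (ev P (L n u)))" by simp
    moreover have "odq P (L n u)" by (rule unit_odq[OF eP u]) (simp add: n_def)
    ultimately show False by (simp add: odq_def)
  qed
  show ?thesis
  proof (rule ccontr)
    assume "r \<noteq> r'"
    then have "r < r' \<or> r' < r" by arith
    then show False
    proof
      assume "r < r'" then show False using main[OF _ u u' eq] by blast
    next
      assume "r' < r" then show False using main[OF _ u' u eq[symmetric]] by blast
    qed
  qed
qed

lemma odd_mod8: "odd (a::int) \<Longrightarrow> a mod 8 = 1 \<or> a mod 8 = 3 \<or> a mod 8 = 5 \<or> a mod 8 = 7" by presburger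
lemma mod4_cases: "(b::int) mod 4 = 0 \<or> b mod 4 = 1 \<or> b mod 4 = 2 \<or> b mod 4 = 3" by presburger

lemma setU: "set U16 = {(a,b). a \<in> {1,3,5,7} \<and> b \<in> {0,1,2,3}}" by (auto simp: U16_def)
lemma setD1: "set D1 = {(a,b). a \<in> {1,3,5,7} \<and> b \<in> {0,2}}" by (auto simp: D1_def)

lemma U16_mem: "odd a \<Longrightarrow> redI (a, b) \<in> set U16"
proof -
  assume "odd a"
  then have "a mod 8 \<in> {1,3,5,7}" using odd_mod8 by blast
  moreover have "b mod 4 \<in> {0,1,2,3}" using mod4_cases by blast
  ultimately show ?thesis unfolding setU redI_def by simp
qed

lemma D1_mem: "odd a \<Longrightarrow> even b \<Longrightarrow> redI (a, b) \<in> set D1"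
proof -
  assume "odd a" "even b"
  then have "b mod 4 = 0 \<or> b mod 4 = 2" by presburger
  then have "b mod 4 \<in> {0,2}" by blast
  moreover have "a mod 8 \<in> {1,3,5,7}" using odd_mod8 \<open>odd a\<close> by blast
  ultimately show ?thesis unfolding setD1 redI_def by simp
qed

lemma D3_mem: "odd a \<Longrightarrow> b mod 2 = p \<Longrightarrow> redI (a, b) \<in> set (D3 p)"
proof -
  assume "odd a" "b mod 2 = p"
  moreover have "b mod 4 mod 2 = b mod 2" by (simp add: mod_mod_cancel)
  ultimately show ?thesis using U16_mem[of a b] unfolding D3_def set_filter by (simp add: redI_def)
qed

lemma cgI_redI: "cg (dI P) x y \<Longrightarrow> redI (ev P x) = redI (ev P y)"
  by (auto simp: cg_def dI_def redI_def mod_eq_dvd_iff)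

lemma ev_qpi_pow: "ev P (qpi ^ j) = ppow P (0, 1) j"
  by (induction j) (simp_all add: qpi_def)

lemma o_sum_O: "(\<And>i. i < s \<Longrightarrow> f i \<in> O_carrier) \<Longrightarrow> o_sum f s \<in> O_carrier"
  by (induction s) (simp_all add: o_zero_O o_add_O)

definition Yo :: "nat \<Rightarrow> oelt" where
  "Yo e = (if e = 0 then o_zero else if e = 1 then o_one else (z2_of_int 1, z2_of_int 1))"

lemma Yo_O: "Yo e \<in> O_carrier" by (simp add: Yo_def o_zero_O o_one_O o_const_O)

lemma qc11: "qc 1 1 = 1 + qpi" by (rule ev_inj) (simp add: qpi_def)
lemma qc02: "qc 0 2 = 2 * qpi" by (rule ev_inj) (simp add: qpi_def pmul_def)

lemma L_Yo: "cgn P n (L n (Yo e)) (Yq e)"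
  using L_one[of P n] L_const[of P n 1 1] by (simp add: Yo_def Yq_def qc11 isid_dv)


lemma lv_decomp: "cgn P n (L n (o_mul P (o_pow P o_pi q) v)) (qpi ^ q * L n v)"
  by (rule cg_trans[OF isid_dv L_mul cg_mult[OF isid_dv cg_trans[OF isid_dv L_pow cg_power[OF isid_dv L_pi]] cg_refl[OF isid_dv]]])

lemma lvl_ne: fixes kk jj d :: nat assumes "kk < d" "2 \<le> jj" "jj \<le> 4" "6 \<le> d" shows "(kk + jj) mod d \<noteq> kk"
proof (cases "kk + jj < d")
  case True then show ?thesis using assms by simp
next
  case False
  then have "(kk + jj) mod d = kk + jj - d" using assms by (simp add: mod_if)
  then show ?thesis using assms False by simp
qed

lemma exp_comb: "qpi ^ r * U * (qpi ^ t * Y) ^ d = qpi ^ (r + d * t) * (U * Y ^ d)"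
proof -
  have "(qpi ^ t * Y) ^ d = (qpi ^ t) ^ d * Y ^ d" by (rule power_mult_distrib)
  also have "(qpi ^ t) ^ d = qpi ^ (d * t)" by (simp add: power_mult[symmetric] mult.commute)
  finally show ?thesis by (simp add: power_add algebra_simps)
qed

lemma less5: "(k::nat) < 5 \<Longrightarrow> k = 0 \<or> k = 1 \<or> k = 2 \<or> k = 3 \<or> k = 4" by auto

lemma odq_Y: assumes "evP P" "e \<noteq> 0" shows "odq P (Yq e * (1 + 2 * qpi * y))"
proof -
  have "odq P (1 + 2 * qpi * y)" using assms(1) by (simp add: odq_def qpi_def pmul_def evP_def)
  then show ?thesis by (rule odq_mult[OF assms(1) odq_Yq[OF assms(2)]])
qed


theorem lemma8:
  fixes P :: "int \<times> int" and m d s :: nat and a :: "nat \<Rightarrow> oelt"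
  assumes K: "P \<in> ramified_params"
    and m_odd: "odd m" and m_ge: "m \<ge> 3" and d_def: "d = 2 * m"
    and a_in: "\<forall>i<s. a i \<in> O_carrier \<and> a i \<noteq> o_zero"
    and pairs: "\<exists>k<d. \<exists>i1<s. \<exists>i2<s. \<exists>j1<s. \<exists>j2<s. \<exists>c c'.
        distinct [i1, i2, j1, j2] \<and>
        level_coeff P d (a i1) k c \<and> level_coeff P d (a i2) k c \<and>
        level_coeff P d (a j1) k c' \<and> level_coeff P d (a j2) k c' \<and>
        (\<exists>l<s. at_level P d (a l) ((k + 2) mod d) \<or> at_level P d (a l) ((k + 3) mod d)
               \<or> at_level P d (a l) ((k + 4) mod d))"
  shows "\<exists>x. (\<forall>i<s. x i \<in> O_carrier) \<and> (\<exists>i<s. x i \<noteq> o_zero) \<and>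
             o_sum (\<lambda>i. o_mul P (a i) (o_pow P (x i) d)) s = o_zero"
proof -
  obtain oo where oo: "snd P = 2 * oo" "odd oo" using params_facts[OF K] by blast
  have eP: "evP P" using params_facts[OF K] by blast
  have iI: "isid (dI P)" using eP by (intro isid_dI) (simp add: evP_def)
  have iJ: "isid (dv P (2 ^ n))" for n by (rule isid_dv)
  have SS1: "cg (dI P) (SS * SS) 1" by (rule SS1_of[OF K])
  have d6: "d \<ge> 6" using m_ge d_def by simp
  from pairs obtain kk i1 i2 j1 j2 c c' l where
    kk: "kk < d" and idx: "i1 < s" "i2 < s" "j1 < s" "j2 < s" "l < s"
    and dist: "distinct [i1, i2, j1, j2]"
    and lc: "level_coeff P d (a i1) kk c" "level_coeff P d (a i2) kk c" "level_coeff P d (a j1) kk c'" "level_coeff P d (a j2) kk c'"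
    and ll: "at_level P d (a l) ((kk + 2) mod d) \<or> at_level P d (a l) ((kk + 3) mod d) \<or> at_level P d (a l) ((kk + 4) mod d)"
    by blast
  obtain jj c5 where jj: "2 \<le> jj" "jj \<le> 4" and lc5: "level_coeff P d (a l) ((kk + jj) mod d) c5"
  proof -
    from ll show ?thesis unfolding at_level_def
    proof (elim disjE exE)
      fix c5 assume "level_coeff P d (a l) ((kk + 2) mod d) c5" then show ?thesis using that[of 2 c5] by simp
    next
      fix c5 assume "level_coeff P d (a l) ((kk + 3) mod d) c5" then show ?thesis using that[of 3 c5] by simp
    next
      fix c5 assume "level_coeff P d (a l) ((kk + 4) mod d) c5" then show ?thesis using that[of 4 c5] by simp
    qed
  qed
  obtain r0 u0 where A0: "o_unit P u0" "a i1 = o_mul P (o_pow P o_pi r0) u0" "r0 mod d = kk" "pi_coeff P u0 c"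
    using lc(1) unfolding level_coeff_def by blast
  obtain r1 u1 where A1: "o_unit P u1" "a i2 = o_mul P (o_pow P o_pi r1) u1" "r1 mod d = kk" "pi_coeff P u1 c"
    using lc(2) unfolding level_coeff_def by blast
  obtain r2 u2 where A2: "o_unit P u2" "a j1 = o_mul P (o_pow P o_pi r2) u2" "r2 mod d = kk" "pi_coeff P u2 c'"
    using lc(3) unfolding level_coeff_def by blast
  obtain r3 u3 where A3: "o_unit P u3" "a j2 = o_mul P (o_pow P o_pi r3) u3" "r3 mod d = kk" "pi_coeff P u3 c'"
    using lc(4) unfolding level_coeff_def by blast
  obtain r4 u4 where A4: "o_unit P u4" "a l = o_mul P (o_pow P o_pi r4) u4" "r4 mod d = (kk + jj) mod d"
    using lc5 unfolding level_coeff_def by blast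
  have lne: "(kk + jj) mod d \<noteq> kk" by (rule lvl_ne[OF kk jj d6])
  have l_ne: "l \<noteq> i1" "l \<noteq> i2" "l \<noteq> j1" "l \<noteq> j2"
  proof -
    have gen: False if "o_unit P u" "o_mul P (o_pow P o_pi r4) u4 = o_mul P (o_pow P o_pi r) u" "r mod d = kk" for r u
    proof -
      have "r4 = r" by (rule val_uniq[OF eP oo A4(1) that(1) that(2)])
      then show False using A4(3) that(3) lne by simp
    qed
    show "l \<noteq> i1" using gen[OF A0(1) _ A0(3)] A0(2) A4(2) by metis
    show "l \<noteq> i2" using gen[OF A1(1) _ A1(3)] A1(2) A4(2) by metis
    show "l \<noteq> j1" using gen[OF A2(1) _ A2(3)] A2(2) A4(2) by metis
    show "l \<noteq> j2" using gen[OF A3(1) _ A3(3)] A3(2) A4(2) by metis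
  qed
  have dist5: "distinct [i1, i2, j1, j2, l]" using dist l_ne by auto
  define ii where "ii k = [i1, i2, j1, j2, l] ! k" for k
  define rr where "rr k = [r0, r1, r2, r3, r4] ! k" for k
  define uu where "uu k = [u0, u1, u2, u3, u4] ! k" for k
  have ii_s: "ii k < s" if "k < 5" for k using less5[OF that] idx by (auto simp: ii_def)
  have uu_unit: "o_unit P (uu k)" if "k < 5" for k using less5[OF that] A0 A1 A2 A3 A4 by (auto simp: uu_def)
  have uu_O: "uu k \<in> O_carrier" if "k < 5" for k using unit_O[OF uu_unit[OF that]] .
  have a_ii: "a (ii k) = o_mul P (o_pow P o_pi (rr k)) (uu k)" if "k < 5" for k
    using less5[OF that] A0 A1 A2 A3 A4 by (auto simp: ii_def rr_def uu_def)
  have rr_mod: "rr k mod d = kk" if "k < 4" for k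
    using that A0 A1 A2 A3 by (auto simp: rr_def less_Suc_eq numeral_eq_Suc)
  have rr4: "rr 4 mod d = (kk + jj) mod d" using A4 by (simp add: rr_def)
  have inj_ii: "inj_on ii {..<5}"
  proof (rule inj_onI)
    fix x y assume "x \<in> {..<5}" "y \<in> {..<5}" "ii x = ii y"
    then show "x = y" using dist5 unfolding ii_def by (simp add: nth_eq_iff_index_eq)
  qed
  define qk where "qk k = rr k div d" for k
  define Q where "Q = qk 0 + qk 1 + qk 2 + qk 3 + qk 4 + 1"
  define tt where "tt k = (if k < 4 then Q - qk k else Q + (if kk + jj \<ge> d then 1 else 0) - qk 4)" for k
  define ER where "ER = kk + d * Q"
  have qle: "qk k \<le> Q" if "k < 5" for k using less5[OF that] by (auto simp: Q_def)
  have ex4: "rr k + d * tt k = ER" if "k < 4" for k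
  proof -
    have k5: "k < 5" using that by simp
    obtain \<delta> where \<delta>: "Q = qk k + \<delta>" using qle[OF k5] le_Suc_ex by blast
    have "rr k = kk + d * qk k" using rr_mod[OF that] unfolding qk_def by (metis mod_mult_div_eq)
    moreover have "tt k = \<delta>" using that \<delta> by (simp add: tt_def)
    ultimately show ?thesis unfolding ER_def \<delta> by (simp add: algebra_simps)
  qed
  have ex5: "rr 4 + d * tt 4 = ER + jj"
  proof -
    obtain \<delta> where \<delta>: "Q = qk 4 + \<delta>" using qle[of 4] le_Suc_ex by force
    have r4e: "rr 4 = (kk + jj) mod d + d * qk 4" using rr4 unfolding qk_def by (metis mod_mult_div_eq)
    show ?thesis
    proof (cases "kk + jj < d")
      case True
      then have "tt 4 = \<delta>" using \<delta> by (simp add: tt_def)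
      moreover have "(kk + jj) mod d = kk + jj" using True by simp
      ultimately show ?thesis using r4e unfolding ER_def \<delta> by (simp add: algebra_simps)
    next
      case False
      then have "tt 4 = \<delta> + 1" using \<delta> by (simp add: tt_def)
      moreover have "(kk + jj) mod d = kk + jj - d" using False kk jj d6 by (simp add: mod_if)
      ultimately show ?thesis using r4e False unfolding ER_def \<delta> by (simp add: algebra_simps)
    qed
  qed
  define cf where "cf n k = (if k = 4 then qpi ^ jj * L n (uu 4) else if k < 4 then L n (uu k) else 0)" for n k
  have ccomp: "cgn P n (cf (Suc n) k) (cf n k)" for n k
  proof (cases "k < 5")
    case True
    show ?thesis using True
      by (auto simp: cf_def intro!: cg_mult[OF iJ] L_compat uu_O simp: iJ)
  next
    case False
    then have "k \<noteq> 4" by simp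
    then show ?thesis using False by (simp add: cf_def iJ)
  qed
  obtain v0 where v0: "v0 \<in> O_carrier" "\<And>n. cgn P n (L n (uu 0) * L n v0) 1"
    using unit_L[OF uu_unit[of 0]] by auto
  define w where "w = L 3 v0"
  define xx where "xx k = w * cf 3 k" for k
  have c3: "cgn P 3 (L 3 (uu 0) * w) 1" using v0(2)[of 3] by (simp add: w_def)
  have c3': "cgn P 3 (w * L 3 (uu 0)) 1" using c3 by (simp add: mult.commute)
  have x0: "cg (dI P) (xx 0) 1" using cgn_3_dI[OF c3'] by (simp add: xx_def cf_def)
  have wodd: "odq P w" by (rule odq_of_unit_prod[OF eP c3']) simp
  have uodd: "odq P (L n (uu k))" if "k < 5" "n \<ge> 1" for k n by (rule unit_odq[OF eP uu_unit[OF that(1)] that(2)])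
  have to2: "cg (dv P 2) x y" if "cgn P 3 x y" for x y
    using that dv_mono_le[of 1 3 P] by (simp add: cg_def)
  have p0: "cg (dv P 2) (L 3 (uu 0)) (1 + of_nat c * qpi)" using pi_coeff_mod2[OF eP A0(4)] by (simp add: uu_def)
  have p1: "cg (dv P 2) (L 3 (uu 1)) (1 + of_nat c * qpi)" using pi_coeff_mod2[OF eP A1(4)] by (simp add: uu_def)
  have p2: "cg (dv P 2) (L 3 (uu 2)) (1 + of_nat c' * qpi)" using pi_coeff_mod2[OF eP A2(4)] by (simp add: uu_def)
  have p3: "cg (dv P 2) (L 3 (uu 3)) (1 + of_nat c' * qpi)" using pi_coeff_mod2[OF eP A3(4)] by (simp add: uu_def)
  have i2: "isid (dv P 2)" by (rule isid_dv)
  have x1m: "cg (dv P 2) (xx 1) 1"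
  proof -
    have "cg (dv P 2) (L 3 (uu 1)) (L 3 (uu 0))" using cg_trans[OF i2 p1 cg_sym[OF i2 p0]] .
    then have "cg (dv P 2) (w * L 3 (uu 1)) (w * L 3 (uu 0))" by (rule cg_multL[OF i2])
    moreover have "cg (dv P 2) (w * L 3 (uu 0)) 1" using to2[OF c3'] .
    ultimately show ?thesis unfolding xx_def cf_def by (simp add: cg_trans[OF i2])
  qed
  have x32: "cg (dv P 2) (xx 3) (xx 2)"
  proof -
    have "cg (dv P 2) (L 3 (uu 3)) (L 3 (uu 2))" using cg_trans[OF i2 p3 cg_sym[OF i2 p2]] .
    then have "cg (dv P 2) (w * L 3 (uu 3)) (w * L 3 (uu 2))" by (rule cg_multL[OF i2])
    then show ?thesis unfolding xx_def cf_def by simp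
  qed
  have r1: "redI (ev P (xx 1)) \<in> set D1"
  proof -
    have "2 dvd fst (ev P (xx 1)) - 1" "2 dvd snd (ev P (xx 1))" using x1m by (simp_all add: cg_def dv_def)
    then have "odd (fst (ev P (xx 1)))" "even (snd (ev P (xx 1)))" by presburger+
    then show ?thesis using D1_mem by (metis prod.collapse)
  qed
  have odx: "odq P (xx k)" if "k = 2 \<or> k = 3" for k
    using that by (auto simp: xx_def cf_def intro!: odq_mult[OF eP wodd] uodd)
  have r2: "redI (ev P (xx 2)) \<in> set U16"
    using odx[of 2] U16_mem by (metis odq_def prod.collapse)
  have r3: "redI (ev P (xx 3)) \<in> set (D3 (snd (redI (ev P (xx 2))) mod 2))"
  proof -
    have "2 dvd snd (ev P (xx 3)) - snd (ev P (xx 2))" using x32 by (simp add: cg_def dv_def)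
    then have "snd (ev P (xx 3)) mod 2 = snd (redI (ev P (xx 2))) mod 2"
      by (simp add: redI_def mod_mod_cancel mod_eq_dvd_iff)
    then show ?thesis using odx[of 3] D3_mem by (metis odq_def prod.collapse)
  qed
  have r4: "redI (ev P (xx 4)) \<in> set T5"
  proof -
    define \<rho> where "\<rho> = redI (ev P (w * L 3 (uu 4)))"
    have "odq P (w * L 3 (uu 4))" by (rule odq_mult[OF eP wodd uodd]) simp_all
    then have \<rho>U: "\<rho> \<in> set U16" unfolding \<rho>_def using U16_mem by (metis odq_def prod.collapse)
    have C: "COVP P" using params_facts[OF K] by blast
    have "list_all (\<lambda>v. list_all (\<lambda>j. redI (pmul P (ppow P (0, 1) j) v) \<in> set T5) [2, 3, 4]) U16"
      using C by (simp add: COVP_def)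
    moreover have "jj \<in> set [2, 3, 4]" using jj by auto
    ultimately have T: "redI (pmul P (ppow P (0, 1) jj) \<rho>) \<in> set T5" using \<rho>U
      unfolding list_all_iff by blast
    have "cg (dI P) (qp \<rho>) (w * L 3 (uu 4))"
      unfolding \<rho>_def by (rule cg_trans[OF iI redI_cg ev_eq_cgI]) simp
    then have "cg (dI P) (qpi ^ jj * qp \<rho>) (qpi ^ jj * (w * L 3 (uu 4)))" by (rule cg_multL[OF iI])
    moreover have "qpi ^ jj * (w * L 3 (uu 4)) = xx 4" by (simp add: xx_def cf_def algebra_simps)
    ultimately have "redI (ev P (xx 4)) = redI (ev P (qpi ^ jj * qp \<rho>))" using cgI_redI cg_sym[OF iI] by metis
    also have "\<dots> = redI (pmul P (ppow P (0, 1) jj) \<rho>)" by (simp add: ev_qpi_pow)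
    finally show ?thesis using T by simp
  qed
  have "Solv P xx" by (rule residue_solv[OF K x0 r1 r2 r3 r4])
  then have S3: "Solv P (cf 3)"
    using Solv_scale[OF iI, of "L 3 (uu 0)" w "cf 3"] c3 cgn_3_dI unfolding xx_def by blast
  obtain e where e: "\<forall>k<5. e k \<le> 2" "\<exists>h<4. e h \<noteq> 0" "dI P (\<Sum>k<5. cf 3 k * Yq (e k) ^ (2 * m))"
    using Solv_to_yh[OF iI SS1 m_odd S3] by blast
  obtain h where h: "h < 4" "e h \<noteq> 0" using e(2) by blast
  have hens: "\<exists>z\<in>O_carrier. \<forall>n. cgn P n (\<Sum>k<5. cf n k * (if k = h then Yq (e h) * (1 + 2 * qpi * L n z) else Yq (e k)) ^ (2 * m)) 0"
  proof (rule hensel[OF eP oo m_odd ccomp])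
    show "h < 5" using h by simp
    show "odq P (cf n h)" if "n \<ge> 1" for n using uodd[of h n] h that by (simp add: cf_def)
    show "odq P (Yq (e h))" by (rule odq_Yq[OF h(2)])
    show "dI P (\<Sum>k<5. cf 3 k * Yq (e k) ^ (2 * m))" by (rule e(3))
  qed
  obtain z where zO: "z \<in> O_carrier" and zs0: "\<And>n. cgn P n (\<Sum>k<5. cf n k * (if k = h then Yq (e h) * (1 + 2 * qpi * L n z) else Yq (e k)) ^ (2 * m)) 0"
    using hens by blast
  define Yn where "Yn n k = (if k = h then Yq (e h) * (1 + 2 * qpi * L n z) else Yq (e k))" for n k
  have zs: "cgn P n (\<Sum>k<5. cf n k * Yn n k ^ d) 0" for n using zs0[of n] by (simp add: Yn_def d_def)
  define Zh where "Zh = o_mul P (Yo (e h)) (o_add o_one (o_mul P (z2_of_int 0, z2_of_int 2) z))"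
  define Yk where "Yk k = (if k = h then Zh else Yo (e k))" for k
  define Xk where "Xk k = o_mul P (o_pow P o_pi (tt k)) (Yk k)" for k
  define x where "x i = (if i = i1 then Xk 0 else if i = i2 then Xk 1 else if i = j1 then Xk 2 else if i = j2 then Xk 3 else if i = l then Xk 4 else o_zero)" for i
  have x_ii: "x (ii k) = Xk k" if "k < 5" for k using less5[OF that] dist5 by (auto simp: x_def ii_def)
  have img: "ii ` {..<5} = {i1, i2, j1, j2, l}"
  proof -
    have "{..<5::nat} = {0, 1, 2, 3, 4}" by auto
    then show ?thesis by (simp add: ii_def)
  qed
  have x_other: "x i = o_zero" if "i \<notin> ii ` {..<5}" for i using that unfolding img by (simp add: x_def)
  have ZhO: "Zh \<in> O_carrier" unfolding Zh_def
    by (intro o_mul_O Yo_O o_add_O o_one_O o_const_O zO)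
  have YkO: "Yk k \<in> O_carrier" for k by (simp add: Yk_def ZhO Yo_O)
  have XkO: "Xk k \<in> O_carrier" for k unfolding Xk_def by (intro o_mul_O o_pow_O o_pi_O YkO)
  have xO: "x i \<in> O_carrier" for i by (simp add: x_def XkO o_zero_O)
  have LYk: "cgn P n (L n (Yk k)) (Yn n k)" for n k
  proof (cases "k = h")
    case True
    have "cgn P n (L n (o_mul P (z2_of_int 0, z2_of_int 2) z)) (qc 0 2 * L n z)"
      by (rule cg_trans[OF iJ L_mul cg_mult[OF iJ L_const cg_refl[OF iJ]]])
    then have a1: "cgn P n (L n (o_mul P (z2_of_int 0, z2_of_int 2) z)) (2 * qpi * L n z)"
      by (simp only: qc02)
    have a2: "cgn P n (L n (o_add o_one (o_mul P (z2_of_int 0, z2_of_int 2) z))) (1 + 2 * qpi * L n z)"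
      by (rule cg_trans[OF iJ L_add cg_add[OF iJ L_one a1]])
    have "cgn P n (L n Zh) (Yq (e h) * (1 + 2 * qpi * L n z))"
      unfolding Zh_def by (rule cg_trans[OF iJ L_mul cg_mult[OF iJ L_Yo a2]])
    then show ?thesis using True by (simp add: Yk_def Yn_def)
  next
    case False
    then show ?thesis using L_Yo by (simp add: Yk_def Yn_def)
  qed
  have LXk: "cgn P n (L n (Xk k)) (qpi ^ tt k * Yn n k)" for n k
    unfolding Xk_def by (rule cg_trans[OF iJ lv_decomp cg_mult[OF iJ cg_refl[OF iJ] LYk]])
  define S where "S = o_sum (\<lambda>i. o_mul P (a i) (o_pow P (x i) d)) s"
  have SO: "S \<in> O_carrier" unfolding S_def
    by (rule o_sum_O) (use a_in in \<open>auto intro!: o_mul_O o_pow_O xO\<close>)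
  have d0: "d > 0" using d6 by simp
  have LS: "cgn P n (L n S) 0" for n
  proof -
    define f where "f i = L n (a i) * L n (x i) ^ d" for i
    have 1: "cgn P n (L n S) (\<Sum>i<s. f i)"
    proof -
      have "cgn P n (L n S) (\<Sum>i<s. L n (o_mul P (a i) (o_pow P (x i) d)))" unfolding S_def by (rule L_sum)
      moreover have "cgn P n (\<Sum>i<s. L n (o_mul P (a i) (o_pow P (x i) d))) (\<Sum>i<s. f i)"
        unfolding f_def by (rule cg_sum[OF iJ]) (rule cg_trans[OF iJ L_mul cg_mult[OF iJ cg_refl[OF iJ] L_pow]])
      ultimately show ?thesis by (rule cg_trans[OF iJ])
    qed
    have 2: "(\<Sum>i<s. f i) = (\<Sum>k<5. f (ii k))"
    proof -
      have "(\<Sum>i<s. f i) = (\<Sum>i\<in>ii ` {..<5}. f i)"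
      proof (rule sum.mono_neutral_right)
        show "ii ` {..<5} \<subseteq> {..<s}" using ii_s by auto
        have "(0::qq) ^ d = 0" using d0 by (simp add: power_0_left)
        then show "\<forall>i\<in>{..<s} - ii ` {..<5}. f i = 0" by (auto simp: f_def x_other)
      qed simp
      also have "\<dots> = (\<Sum>k<5. f (ii k))" by (simp add: sum.reindex[OF inj_ii])
      finally show ?thesis .
    qed
    have 3: "cgn P n (f (ii k)) (qpi ^ ER * (cf n k * Yn n k ^ d))" if "k < 5" for k
    proof -
      have "cgn P n (L n (a (ii k))) (qpi ^ rr k * L n (uu k))" using a_ii[OF that] lv_decomp by simp
      then have "cgn P n (f (ii k)) (qpi ^ rr k * L n (uu k) * (qpi ^ tt k * Yn n k) ^ d)"
        unfolding f_def x_ii[OF that] by (rule cg_mult[OF iJ _ cg_power[OF iJ LXk]])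
      moreover have "qpi ^ rr k * L n (uu k) * (qpi ^ tt k * Yn n k) ^ d = qpi ^ ER * (cf n k * Yn n k ^ d)"
      proof (cases "k = 4")
        case True
        have "qpi ^ rr k * L n (uu k) * (qpi ^ tt k * Yn n k) ^ d = qpi ^ (ER + jj) * (L n (uu 4) * Yn n k ^ d)"
          using exp_comb ex5 True by simp
        then show ?thesis using True by (simp add: cf_def power_add algebra_simps)
      next
        case False
        then have "k < 4" using that by simp
        then show ?thesis using exp_comb ex4 by (simp add: cf_def)
      qed
      ultimately show ?thesis by simp
    qed
    have "cgn P n (\<Sum>k<5. f (ii k)) (\<Sum>k<5. qpi ^ ER * (cf n k * Yn n k ^ d))"
      by (rule cg_sum[OF iJ]) (simp add: 3)
    moreover have "(\<Sum>k<5. qpi ^ ER * (cf n k * Yn n k ^ d)) = qpi ^ ER * (\<Sum>k<5. cf n k * Yn n k ^ d)"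
      by (simp add: sum_distrib_left)
    moreover have "cgn P n (qpi ^ ER * (\<Sum>k<5. cf n k * Yn n k ^ d)) 0" by (rule cg_0_mult[OF iJ zs])
    ultimately show ?thesis using 1 2 by (metis cg_trans[OF iJ])
  qed
  have S0: "S = o_zero" by (rule O_eq_iff[OF SO o_zero_O, of P]) (simp add: LS)
  have nz: "x (ii h) \<noteq> o_zero"
  proof
    assume "x (ii h) = o_zero"
    then have X0: "Xk h = o_zero" using x_ii[of h] h by simp
    define n where "n = Suc (tt h)"
    have "cgn P n (qpi ^ tt h * Yn n h) 0"
      using cg_sym[OF iJ LXk[of n h]] X0 by simp
    then have ev: "even (fst (ev P (Yn n h)))" unfolding n_def by (rule pi_cancel[OF eP oo])
    have "odq P (Yn n h)" using odq_Y[OF eP h(2)] by (simp add: Yn_def)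
    then show False using ev by (simp add: odq_def)
  qed
  show ?thesis
  proof (intro exI[of _ x] conjI)
    show "\<forall>i<s. x i \<in> O_carrier" by (simp add: xO)
    show "\<exists>i<s. x i \<noteq> o_zero" using nz ii_s[of h] h by auto
    show "o_sum (\<lambda>i. o_mul P (a i) (o_pow P (x i) d)) s = o_zero" using S0 by (simp add: S_def)
  qed
qed


end
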